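(* Let $\mathfrak g$ be a $(2n+2)$-dimensional real almost abelian Lie algebra with $\dim\mathfrak g\ge 6$ (i.e. $n\ge2$). Then $\mathfrak g$ admits an LCS structure if and only if $\mathfrak g$ is isomorphic to $\mathbb R f_1\ltimes_M\mathbb R^{2n+1}$, where $\mathbb R^{2n+1}$ is an abelian ideal with basis $\{f_2,u_1,\dots,u_n,v_1,\dots,v_n\}$ and $M=\operatorname{ad}_{f_1}|_{\mathbb R^{2n+1}}$ has matrix $M=\begin{pmatrix}\mu & w^{T}\\ 0 & \lambda I_{2n}+B\end{pmatrix}$ for some $\mu,\lambda\in\mathbb R$ with $\lambda\neq 0$, $w\in\mathbb R^{2n}$ and $B\in\mathfrak{sp}(n,\mathbb R)$. In this case $\omega=f^1\wedge f^2+\sum_{i=1}^n u^i\wedge v^i$ is an LCS form with Lee form $\theta=-2\lambda f^1$, where $\{f^1,f^2,u^1,\dots,u^n,v^1,\dots,v^n\}$ is the dual basis. Moreover, $\mathfrak g$ is unimodular if and only if $\lambda=-\frac{\mu}{2n}$.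
   Context: An almost abelian Lie algebra is a real Lie algebra with an abelian ideal of codimension one. An LCS (locally conformal symplectic) structure on a Lie algebra $\mathfrak g$ is a pair $(\omega,\theta)$ with $\omega\in\Lambda^2\mathfrak g^*$ non-degenerate and $\theta\in\mathfrak g^*$ closed and nonzero, such that $d\omega=\theta\wedge\omega$ ($d$ the Chevalley–Eilenberg differential); $\theta$ is the Lee form. $\mathfrak{sp}(n,\mathbb R)$ is the set of real $2n\times2n$ matrices $B$ (acting on $\operatorname{span}\{u_i,v_i\}$ in the given basis) with $B^{T}\Omega+\Omega B=0$, $\Omega=\begin{pmatrix}0&I_n\\-I_n&0\end{pmatrix}$. Unimodular means $\operatorname{tr}\operatorname{ad}_x=0$ for all $x$. *)

theory Defs
  imports "HOL-Analysis.Analysis"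
begin

definition lie_algebra :: "('a::euclidean_space \<Rightarrow> 'a \<Rightarrow> 'a) \<Rightarrow> bool" where
  "lie_algebra br \<longleftrightarrow> bilinear br \<and> (\<forall>x. br x x = 0) \<and>
     (\<forall>x y z. br x (br y z) + br y (br z x) + br z (br x y) = 0)"

definition almost_abelian :: "('a::euclidean_space \<Rightarrow> 'a \<Rightarrow> 'a) \<Rightarrow> bool" where
  "almost_abelian br \<longleftrightarrow> (\<exists>h::'a set. subspace h \<and> dim h = DIM('a) - 1 \<and>
     (\<forall>x\<in>h. \<forall>y\<in>h. br x y = 0) \<and> (\<forall>x. \<forall>y\<in>h. br x y \<in> h))"

definition ce_d2 :: "('a \<Rightarrow> 'a \<Rightarrow> 'a) \<Rightarrow> ('a \<Rightarrow> 'a \<Rightarrow> real) \<Rightarrow> 'a \<Rightarrow> 'a \<Rightarrow> 'a \<Rightarrow> real" where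
  "ce_d2 br \<omega> x y z = - \<omega> (br x y) z + \<omega> (br x z) y - \<omega> (br y z) x"

definition wedge12 :: "('a \<Rightarrow> real) \<Rightarrow> ('a \<Rightarrow> 'a \<Rightarrow> real) \<Rightarrow> 'a \<Rightarrow> 'a \<Rightarrow> 'a \<Rightarrow> real" where
  "wedge12 \<theta> \<omega> x y z = \<theta> x * \<omega> y z - \<theta> y * \<omega> x z + \<theta> z * \<omega> x y"

text \<open>LCS structure (omega, theta) on the Lie algebra (br): omega a non-degenerate
  2-form, theta a nonzero closed 1-form (d theta (x,y) = - theta [x,y]), d omega = theta wedge omega.\<close>
definition LCS :: "('a::euclidean_space \<Rightarrow> 'a \<Rightarrow> 'a) \<Rightarrow> ('a \<Rightarrow> 'a \<Rightarrow> real) \<Rightarrow> ('a \<Rightarrow> real) \<Rightarrow> bool" where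
  "LCS br \<omega> \<theta> \<longleftrightarrow> bilinear \<omega> \<and> (\<forall>x. \<omega> x x = 0) \<and>
     (\<forall>x. (\<forall>y. \<omega> x y = 0) \<longrightarrow> x = 0) \<and>
     linear \<theta> \<and> \<theta> \<noteq> (\<lambda>x. 0) \<and> (\<forall>x y. \<theta> (br x y) = 0) \<and>
     (\<forall>x y z. ce_d2 br \<omega> x y z = wedge12 \<theta> \<omega> x y z)"

definition unimodular :: "('a::euclidean_space \<Rightarrow> 'a \<Rightarrow> 'a) \<Rightarrow> bool" where
  "unimodular br \<longleftrightarrow> (\<forall>x. (\<Sum>b\<in>Basis. br x b \<bullet> b) = 0)"

text \<open>The matrix Omega = [[0, I_n], [-I_n, 0]], indices 0..<2n.\<close>
definition Omega :: "nat \<Rightarrow> nat \<Rightarrow> nat \<Rightarrow> real" where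
  "Omega n i j = (if i < n \<and> j = i + n then 1 else if j < n \<and> i = j + n then -1 else 0)"

definition in_sp :: "nat \<Rightarrow> (nat \<Rightarrow> nat \<Rightarrow> real) \<Rightarrow> bool" where
  "in_sp n B \<longleftrightarrow> (\<forall>i<2*n. \<forall>k<2*n.
     (\<Sum>j<2*n. B j i * Omega n j k) + (\<Sum>j<2*n. Omega n i j * B j k) = 0)"

definition is_basis_fam :: "nat \<Rightarrow> (nat \<Rightarrow> 'a::euclidean_space) \<Rightarrow> bool" where
  "is_basis_fam N e \<longleftrightarrow> (\<forall>c. (\<Sum>i<N. c i *\<^sub>R e i) = 0 \<longrightarrow> (\<forall>i<N. c i = 0)) \<and>
     span (e ` {..<N}) = UNIV"

definition dual_coord :: "nat \<Rightarrow> (nat \<Rightarrow> 'a::euclidean_space) \<Rightarrow> nat \<Rightarrow> 'a \<Rightarrow> real" where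
  "dual_coord N e k x = (THE c. (\<forall>i\<ge>N. c i = 0) \<and> x = (\<Sum>i<N. c i *\<^sub>R e i)) k"

text \<open>The basis e = (f1, f2, u_1..u_n, v_1..v_n), i.e. e 0 = f1, e 1 = f2,
  e (j+2) = u_(j+1) for j < n and e (j+2) = v_(j-n+1) for n \<le> j < 2n,
  exhibits the Lie algebra as R f1 \<ltimes>_M R^(2n+1), R^(2n+1) = span{e 1..e (2n+1)} abelian,
  M = ad_f1 restricted, with matrix [[mu, w^T],[0, lam I_2n + B]] in the basis
  (f2, u_1..u_n, v_1..v_n) (columns = images of basis vectors).\<close>
definition semidirect_form ::
  "('a::euclidean_space \<Rightarrow> 'a \<Rightarrow> 'a) \<Rightarrow> nat \<Rightarrow> (nat \<Rightarrow> 'a) \<Rightarrow> real \<Rightarrow> real \<Rightarrow>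
   (nat \<Rightarrow> real) \<Rightarrow> (nat \<Rightarrow> nat \<Rightarrow> real) \<Rightarrow> bool" where
  "semidirect_form br n e mu lam w B \<longleftrightarrow>
     is_basis_fam (2*n+2) e \<and> in_sp n B \<and>
     (\<forall>a\<in>{1..2*n+1}. \<forall>b\<in>{1..2*n+1}. br (e a) (e b) = 0) \<and>
     br (e 0) (e 1) = mu *\<^sub>R e 1 \<and>
     (\<forall>j<2*n. br (e 0) (e (j+2)) =
        w j *\<^sub>R e 1 + (\<Sum>i<2*n. ((if i = j then lam else 0) + B i j) *\<^sub>R e (i+2)))"

text \<open>omega = f^1 \<and> f^2 + sum_i u^i \<and> v^i, with (a \<and> b)(x,y) = a x b y - a y b x.\<close>
definition omega_std :: "nat \<Rightarrow> (nat \<Rightarrow> 'a::euclidean_space) \<Rightarrow> 'a \<Rightarrow> 'a \<Rightarrow> real" where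
  "omega_std n e x y =
     (let c = dual_coord (2*n+2) e in
       c 0 x * c 1 y - c 0 y * c 1 x +
       (\<Sum>i<n. c (i+2) x * c (i+n+2) y - c (i+2) y * c (i+n+2) x))"

end

theory Submission
  imports Defs
begin

lemma linear_zero_span:
  assumes "linear f" "\<And>x. x \<in> S \<Longrightarrow> f x = 0" "x \<in> span S"
  shows "f x = 0"
  using linear_eq_on_span[OF assms(1) linear_zero, of S x] assms by auto

lemma tri_vanish:
  fixes F :: "'a::real_vector \<Rightarrow> 'a \<Rightarrow> 'a \<Rightarrow> real"
  assumes l1: "\<And>y z. linear (\<lambda>x. F x y z)" and l2: "\<And>x z. linear (\<lambda>y. F x y z)"
    and l3: "\<And>x y. linear (\<lambda>z. F x y z)"
    and sp: "span S = UNIV" and v: "\<And>a b c. a\<in>S \<Longrightarrow> b\<in>S \<Longrightarrow> c\<in>S \<Longrightarrow> F a b c = 0"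
  shows "F x y z = 0"
proof -
  have 1: "F a b z = 0" if "a\<in>S" "b\<in>S" for a b z
    using linear_zero_span[OF l3, of S a b z] v that sp by auto
  have 2: "F a y z = 0" if "a\<in>S" for a y z
    using linear_zero_span[OF l2, of S a z y] 1 that sp by auto
  show ?thesis
    using linear_zero_span[OF l1, of S y z x] 2 sp by auto
qed

lemma bi_vanish:
  fixes F :: "'a::real_vector \<Rightarrow> 'a \<Rightarrow> 'c::real_vector"
  assumes l1: "\<And>y. linear (\<lambda>x. F x y)" and l2: "\<And>x. linear (\<lambda>y. F x y)"
    and sp: "span S = UNIV" and v: "\<And>a b. a\<in>S \<Longrightarrow> b\<in>S \<Longrightarrow> F a b = 0"
  shows "F x y = 0"
proof -
  have 1: "F a y = 0" if "a\<in>S" for a y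
    using linear_zero_span[OF l2, of S a y] v that sp by auto
  show ?thesis
    using linear_zero_span[OF l1, of S y x] 1 sp by auto
qed

lemma sum_delta_scale:
  fixes g :: "nat \<Rightarrow> 'a::real_vector"
  shows "(\<Sum>k<N. (if k = i then 1 else 0) *\<^sub>R g k) = (if i < N then g i else 0)"
  by (simp add: if_distrib[of "\<lambda>t. t *\<^sub>R _"] cong: if_cong)

lemma span_image_repr:
  fixes e :: "nat \<Rightarrow> 'a::real_vector"
  assumes "x \<in> span (e ` {..<N})"
  shows "\<exists>c. x = (\<Sum>i<N. c i *\<^sub>R e i)"
proof -
  have "subspace {x. \<exists>c. x = (\<Sum>i<N. c i *\<^sub>R e i)}"
    unfolding subspace_def
  proof safe
    show "\<exists>c. 0 = (\<Sum>i<N. c i *\<^sub>R e i)" by (rule exI[of _ "\<lambda>_. 0"]) simp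
  next
    fix c c' :: "nat \<Rightarrow> real"
    show "\<exists>d. (\<Sum>i<N. c i *\<^sub>R e i) + (\<Sum>i<N. c' i *\<^sub>R e i) = (\<Sum>i<N. d i *\<^sub>R e i)"
      by (rule exI[of _ "\<lambda>i. c i + c' i"]) (simp add: sum.distrib scaleR_add_left)
  next
    fix r :: real and c :: "nat \<Rightarrow> real"
    show "\<exists>d. r *\<^sub>R (\<Sum>i<N. c i *\<^sub>R e i) = (\<Sum>i<N. d i *\<^sub>R e i)"
      by (rule exI[of _ "\<lambda>i. r * c i"]) (simp add: scaleR_sum_right)
  qed
  moreover have "y \<in> {x. \<exists>c. x = (\<Sum>i<N. c i *\<^sub>R e i)}" if "y \<in> e ` {..<N}" for y
  proof -
    from that obtain j where j: "j < N" "y = e j" by auto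
    show ?thesis
      by (rule CollectI, rule exI[of _ "\<lambda>k. if k = j then 1 else 0"]) (simp add: sum_delta_scale j)
  qed
  ultimately show ?thesis using span_induct[OF assms] by blast
qed

lemma coef_indep_props:
  fixes g :: "nat \<Rightarrow> 'a::euclidean_space"
  assumes ind: "\<And>c. (\<Sum>i<N. c i *\<^sub>R g i) = 0 \<Longrightarrow> (\<forall>i<N. c i = 0)"
  shows "inj_on g {..<N}" "independent (g ` {..<N})" "dim (g ` {..<N}) = N"
proof -
  show inj: "inj_on g {..<N}"
  proof (rule inj_onI, rule ccontr)
    fix i j assume ij: "i \<in> {..<N}" "j \<in> {..<N}" "g i = g j" "i \<noteq> j"
    let ?c = "\<lambda>k. (if k = i then 1 else 0) - (if k = j then (1::real) else 0)"
    have "(\<Sum>k<N. ?c k *\<^sub>R g k) = (\<Sum>k<N. (if k = i then 1 else 0) *\<^sub>R g k) - (\<Sum>k<N. (if k = j then 1 else 0) *\<^sub>R g k)"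
      by (simp add: scaleR_left_diff_distrib sum_subtractf)
    also have "\<dots> = 0" using ij by (simp only: sum_delta_scale) simp
    finally have "\<forall>k<N. ?c k = 0" by (rule ind)
    then have "?c i = 0" using ij by auto
    then show False using ij by simp
  qed
  show indep: "independent (g ` {..<N})"
  proof (subst independent_explicit, intro conjI allI impI ballI)
    fix c :: "'a \<Rightarrow> real" and v assume s: "(\<Sum>v\<in>g ` {..<N}. c v *\<^sub>R v) = 0" and v: "v \<in> g ` {..<N}"
    then obtain k where k: "k < N" "v = g k" by auto
    have "(\<Sum>i<N. c (g i) *\<^sub>R g i) = 0" using s by (simp add: sum.reindex[OF inj])
    then show "c v = 0" using ind[of "\<lambda>i. c (g i)"] k by auto
  qed simp
  show "dim (g ` {..<N}) = N"
    using dim_eq_card_independent[OF indep] card_image[OF inj] by simp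
qed

lemma basis_fam_card:
  fixes e :: "nat \<Rightarrow> 'a::euclidean_space"
  assumes "is_basis_fam N e" shows "N = DIM('a)"
proof -
  have "dim (e ` {..<N}) = N" using assms coef_indep_props(3)[where N=N and g=e] unfolding is_basis_fam_def by blast
  moreover have "dim (e ` {..<N}) = dim (span (e ` {..<N}))" by simp
  ultimately show ?thesis using assms unfolding is_basis_fam_def by simp
qed

lemma dual_coord_prop:
  assumes B: "is_basis_fam N e"
  shows "(\<forall>i\<ge>N. dual_coord N e i x = 0) \<and> x = (\<Sum>i<N. dual_coord N e i x *\<^sub>R e i)"
proof -
  have ind: "\<And>c. (\<Sum>i<N. c i *\<^sub>R e i) = 0 \<Longrightarrow> (\<forall>i<N. c i = 0)" using B unfolding is_basis_fam_def by blast
  obtain c where c: "x = (\<Sum>i<N. c i *\<^sub>R e i)"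
    using span_image_repr[of x e N] B unfolding is_basis_fam_def by auto
  let ?c = "\<lambda>i. if i < N then c i else 0"
  have P: "(\<forall>i\<ge>N. ?c i = 0) \<and> x = (\<Sum>i<N. ?c i *\<^sub>R e i)" using c by simp
  have U: "d = ?c" if "(\<forall>i\<ge>N. d i = 0) \<and> x = (\<Sum>i<N. d i *\<^sub>R e i)" for d
  proof
    fix i
    have "(\<Sum>i<N. (d i - ?c i) *\<^sub>R e i) = 0"
      using that P by (simp add: scaleR_left_diff_distrib sum_subtractf)
    then have "\<forall>i<N. d i - ?c i = 0" by (rule ind)
    then show "d i = ?c i" using that by (cases "i < N") auto
  qed
  have "dual_coord N e = (\<lambda>i x. (THE c. (\<forall>i\<ge>N. c i = 0) \<and> x = (\<Sum>i<N. c i *\<^sub>R e i)) i)"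
    by (simp add: dual_coord_def[abs_def])
  then have "(\<lambda>i. dual_coord N e i x) = (THE c. (\<forall>i\<ge>N. c i = 0) \<and> x = (\<Sum>i<N. c i *\<^sub>R e i))"
    by simp
  also have "\<dots> = ?c" using P U by (rule the_equality)
  finally show ?thesis using P by metis
qed

lemma dual_coord_unique:
  assumes B: "is_basis_fam N e" and x: "x = (\<Sum>i<N. c i *\<^sub>R e i)" and k: "k < N"
  shows "dual_coord N e k x = c k"
proof -
  have ind: "\<And>c. (\<Sum>i<N. c i *\<^sub>R e i) = 0 \<Longrightarrow> (\<forall>i<N. c i = 0)" using B unfolding is_basis_fam_def by blast
  have "x = (\<Sum>i<N. dual_coord N e i x *\<^sub>R e i)" using dual_coord_prop[OF B] by blast
  then have "(\<Sum>i<N. (dual_coord N e i x - c i) *\<^sub>R e i) = 0"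
    using x by (simp add: scaleR_left_diff_distrib sum_subtractf)
  then show ?thesis using ind k by fastforce
qed

lemma dual_coord_basis:
  assumes B: "is_basis_fam N e" and j: "j < N"
  shows "dual_coord N e k (e j) = (if k = j then 1 else 0)"
proof (cases "k < N")
  case True
  have "e j = (\<Sum>i<N. (if i = j then 1 else 0) *\<^sub>R e i)" by (simp add: sum_delta_scale j)
  from dual_coord_unique[OF B this True] show ?thesis by simp
next
  case False then show ?thesis using dual_coord_prop[OF B, of "e j"] j by auto
qed

lemma dual_coord_linear:
  assumes B: "is_basis_fam N e"
  shows "linear (dual_coord N e k)"
proof (rule linearI)
  fix x y
  show "dual_coord N e k (x + y) = dual_coord N e k x + dual_coord N e k y"
  proof (cases "k < N")
    case True
    have "x + y = (\<Sum>i<N. (dual_coord N e i x + dual_coord N e i y) *\<^sub>R e i)"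
      using dual_coord_prop[OF B, of x] dual_coord_prop[OF B, of y]
      by (simp add: scaleR_add_left sum.distrib)
    from dual_coord_unique[OF B this True] show ?thesis .
  next
    case False then show ?thesis using dual_coord_prop[OF B] by simp
  qed
next
  fix r and x :: 'a
  show "dual_coord N e k (r *\<^sub>R x) = r *\<^sub>R dual_coord N e k x"
  proof (cases "k < N")
    case True
    have "r *\<^sub>R x = (\<Sum>i<N. (r * dual_coord N e i x) *\<^sub>R e i)"
      using dual_coord_prop[OF B, of x] by (metis (no_types, lifting) scaleR_scaleR scaleR_sum_right sum.cong)
    from dual_coord_unique[OF B this True] show ?thesis by simp
  next
    case False then show ?thesis using dual_coord_prop[OF B] by simp
  qed
qed



definition dsum :: "('a::real_vector \<Rightarrow> 'a \<Rightarrow> real) \<Rightarrow> nat \<Rightarrow> (nat \<Rightarrow> 'a) \<Rightarrow> (nat \<Rightarrow> 'a) \<Rightarrow> 'a \<Rightarrow> 'a" where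
  "dsum \<omega> m u v x = (\<Sum>i<m. \<omega> x (v i) *\<^sub>R u i - \<omega> x (u i) *\<^sub>R v i)"

lemma bil_sum_left: "bilinear \<omega> \<Longrightarrow> \<omega> (sum f S) y = (\<Sum>i\<in>S. \<omega> (f i) y)"
  unfolding bilinear_def using linear_sum[of "\<lambda>x. \<omega> x y"] by auto

lemma bil_sum_right: "bilinear \<omega> \<Longrightarrow> \<omega> y (sum f S) = (\<Sum>i\<in>S. \<omega> y (f i))"
  unfolding bilinear_def using linear_sum[of "\<lambda>x. \<omega> y x"] by auto

lemma alt_antisym:
  assumes bl: "bilinear \<omega>" and alt: "\<And>x. \<omega> x x = (0::real)"
  shows "\<omega> y x = - \<omega> x y"
proof -
  have "\<omega> (x+y) (x+y) = 0" by (rule alt)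
  then show ?thesis using alt[of x] alt[of y]
    by (simp add: bilinear_ladd[OF bl] bilinear_radd[OF bl])
qed

lemma darboux:
  fixes \<omega> :: "'a::euclidean_space \<Rightarrow> 'a \<Rightarrow> real"
  assumes bl: "bilinear \<omega>" and alt: "\<And>x. \<omega> x x = 0" and V: "subspace V"
  shows "\<exists>m u v. (\<forall>i<m. u i \<in> V \<and> v i \<in> V) \<and>
     (\<forall>i<m. \<forall>j<m. \<omega> (u i) (v j) = (if i = j then 1 else 0) \<and> \<omega> (u i) (u j) = 0 \<and> \<omega> (v i) (v j) = 0) \<and>
     (\<forall>x\<in>V. \<forall>y\<in>V. \<omega> (x - dsum \<omega> m u v x) y = 0)"
  using V
proof (induction "dim V" arbitrary: V rule: less_induct)
  case less
  note bs = bilinear_ladd[OF bl] bilinear_radd[OF bl] bilinear_lsub[OF bl] bilinear_rsub[OF bl]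
     bilinear_lmul[OF bl] bilinear_rmul[OF bl] bilinear_lzero[OF bl] bilinear_rzero[OF bl]
  have as: "\<And>x y. \<omega> y x = - \<omega> x y" using alt_antisym[OF bl alt] .
  show ?case
  proof (cases "\<forall>x\<in>V. \<forall>y\<in>V. \<omega> x y = 0")
    case True
    show ?thesis by (rule exI[of _ 0]) (simp add: dsum_def True)
  next
    case False
    then obtain x0 y0 where xy: "x0 \<in> V" "y0 \<in> V" "\<omega> x0 y0 \<noteq> 0" by auto
    define u0 where "u0 = x0"
    define v0 where "v0 = (1 / \<omega> x0 y0) *\<^sub>R y0"
    have u0V: "u0 \<in> V" and v0V: "v0 \<in> V" using xy less.prems by (auto simp: u0_def v0_def subspace_scale)
    have uv: "\<omega> u0 v0 = 1" using xy by (simp add: u0_def v0_def bs)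
    have vu: "\<omega> v0 u0 = -1" using uv as by metis
    define V' where "V' = {x\<in>V. \<omega> u0 x = 0 \<and> \<omega> v0 x = 0}"
    have sV': "subspace V'"
      using less.prems unfolding V'_def subspace_def by (auto simp: bs)
    have "V' \<subseteq> V" unfolding V'_def by auto
    moreover have "u0 \<notin> V'" using vu unfolding V'_def by auto
    ultimately have "V' \<subset> V" using u0V by blast
    then have "dim V' < dim V"
      using dim_psubset[of V' V] sV' less.prems by (simp add: span_eq_iff[THEN iffD2])
    from less.hyps[OF this sV'] obtain m u v where
      uvV: "\<forall>i<m. u i \<in> V' \<and> v i \<in> V'" and
      rel: "\<forall>i<m. \<forall>j<m. \<omega> (u i) (v j) = (if i = j then 1 else 0) \<and> \<omega> (u i) (u j) = 0 \<and> \<omega> (v i) (v j) = 0" and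
      dec: "\<forall>x\<in>V'. \<forall>y\<in>V'. \<omega> (x - dsum \<omega> m u v x) y = 0" by blast
    have uV: "u i \<in> V" "v i \<in> V" if "i < m" for i using uvV that unfolding V'_def by auto
    have o1: "\<omega> u0 (u i) = 0" "\<omega> u0 (v i) = 0" "\<omega> v0 (u i) = 0" "\<omega> v0 (v i) = 0" if "i < m" for i
      using uvV that unfolding V'_def by auto
    have o2: "\<omega> (u i) u0 = 0" "\<omega> (v i) u0 = 0" "\<omega> (u i) v0 = 0" "\<omega> (v i) v0 = 0" if "i < m" for i
      using o1[OF that] as[of u0 "u i"] as[of u0 "v i"] as[of v0 "u i"] as[of v0 "v i"] by simp_all
    define u' where "u' = case_nat u0 u"
    define v' where "v' = case_nat v0 v"
    have A1: "\<forall>i<Suc m. u' i \<in> V \<and> v' i \<in> V"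
        using u0V v0V uV by (auto simp: u'_def v'_def less_Suc_eq_0_disj)
      have A2: "\<forall>i<Suc m. \<forall>j<Suc m. \<omega> (u' i) (v' j) = (if i = j then 1 else 0) \<and> \<omega> (u' i) (u' j) = 0 \<and> \<omega> (v' i) (v' j) = 0"
      proof (intro allI impI)
        fix i j assume i: "i < Suc m" and j: "j < Suc m"
        show "\<omega> (u' i) (v' j) = (if i = j then 1 else 0) \<and> \<omega> (u' i) (u' j) = 0 \<and> \<omega> (v' i) (v' j) = 0"
        proof (cases i)
          case 0
          then show ?thesis using j o1 alt uv by (cases j) (auto simp: u'_def v'_def)
        next
          case (Suc i')
          then show ?thesis using i j o2 rel by (cases j) (auto simp: u'_def v'_def)
        qed
      qed
      have A3: "\<forall>x\<in>V. \<forall>y\<in>V. \<omega> (x - dsum \<omega> (Suc m) u' v' x) y = 0"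
      proof (intro ballI)
        fix x y assume x: "x \<in> V" and y: "y \<in> V"
        define p where "p = x - (\<omega> x v0 *\<^sub>R u0 - \<omega> x u0 *\<^sub>R v0)"
        define q where "q = y - (\<omega> y v0 *\<^sub>R u0 - \<omega> y u0 *\<^sub>R v0)"
        have pV: "p \<in> V'"
        proof -
          have "p \<in> V" unfolding p_def using x u0V v0V less.prems
            by (intro subspace_diff subspace_scale) auto
          moreover have "\<omega> u0 p = 0" "\<omega> v0 p = 0" unfolding p_def using uv vu alt as[of u0 x] as[of v0 x]
            by (auto simp: bs)
          ultimately show ?thesis unfolding V'_def by auto
        qed
        have qV: "q \<in> V'"
        proof -
          have "q \<in> V" unfolding q_def using y u0V v0V less.prems
            by (intro subspace_diff subspace_scale) auto
          moreover have "\<omega> u0 q = 0" "\<omega> v0 q = 0" unfolding q_def using uv vu alt as[of u0 y] as[of v0 y]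
            by (auto simp: bs)
          ultimately show ?thesis unfolding V'_def by auto
        qed
        have ds: "dsum \<omega> (Suc m) u' v' x = (\<omega> x v0 *\<^sub>R u0 - \<omega> x u0 *\<^sub>R v0) + dsum \<omega> m u v p"
        proof -
          have "dsum \<omega> (Suc m) u' v' x = (\<omega> x v0 *\<^sub>R u0 - \<omega> x u0 *\<^sub>R v0) + dsum \<omega> m u v x"
            unfolding dsum_def u'_def v'_def by (subst sum.lessThan_Suc_shift) simp
          also have "dsum \<omega> m u v x = dsum \<omega> m u v p"
          proof -
            have c: "\<omega> p (v i) = \<omega> x (v i)" "\<omega> p (u i) = \<omega> x (u i)" if "i < m" for i
              unfolding p_def using o1[OF that]
              by (simp_all only: bilinear_lsub[OF bl] bilinear_lmul[OF bl] real_scaleR_def mult_zero_right diff_zero)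
            show ?thesis unfolding dsum_def by (rule sum.cong) (simp_all add: c)
          qed
          finally show ?thesis .
        qed
        have xe: "x - dsum \<omega> (Suc m) u' v' x = p - dsum \<omega> m u v p" using ds p_def by simp
        define z where "z = p - dsum \<omega> m u v p"
        have zV: "z \<in> V'" unfolding z_def dsum_def using pV uvV sV'
          by (intro subspace_diff subspace_sum subspace_scale) auto
        have z0: "\<omega> u0 z = 0" "\<omega> v0 z = 0" using zV unfolding V'_def by auto
        have z1: "\<omega> z u0 = 0" "\<omega> z v0 = 0" using z0 as[of u0 z] as[of v0 z] by simp_all
        have "\<omega> z q = \<omega> z y - (\<omega> y v0 * \<omega> z u0 - \<omega> y u0 * \<omega> z v0)"
          unfolding q_def by (simp only: bilinear_rsub[OF bl] bilinear_rmul[OF bl] real_scaleR_def)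
        moreover have "\<omega> z q = 0" using dec pV qV unfolding z_def by blast
        ultimately have "\<omega> z y = 0" using z1 by simp
        then show "\<omega> (x - dsum \<omega> (Suc m) u' v' x) y = 0" using xe z1 z_def by simp
      qed
      show ?thesis using A1 A2 A3 by blast
  qed
qed



lemma sum2: "(\<Sum>k<Suc (Suc K). g k) = g 0 + g 1 + (\<Sum>i<K. g (i+2))"
  by (simp add: sum.lessThan_Suc_shift del: sum.lessThan_Suc) (simp add: numeral_2_eq_2 add.assoc)

lemma sum_pair_delta:
  "(\<Sum>i<(n::nat). (if i + 2 = a then 1 else 0) * (if i + n + 2 = b then (1::real) else 0))
     = (if 2 \<le> a \<and> a - 2 < n \<and> b = a + n then 1 else 0)"
proof -
  have "(\<Sum>i<(n::nat). (if i + 2 = a then 1 else 0) * (if i + n + 2 = b then (1::real) else 0))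
      = (\<Sum>i<n. if i = a - 2 then (if 2 \<le> a \<and> b = a + n then 1 else 0) else 0)"
    by (rule sum.cong) auto
  then show ?thesis by simp
qed

lemma sum_delta_real: "(\<Sum>i<(N::nat). (if i = j then c else 0) * (X i :: real)) = (if j < N then c * X j else 0)"
proof -
  have "(\<Sum>i<N. (if i = j then c else 0) * (X i :: real)) = (\<Sum>i<N. if i = j then c * X j else 0)"
    by (rule sum.cong) auto
  then show ?thesis by simp
qed

lemma sum_delta_real': "(\<Sum>i<(N::nat). (X i :: real) * (if i = j then c else 0)) = (if j < N then X j * c else 0)"
  using sum_delta_real[where N=N and j=j and c=c and X=X] by (simp add: mult.commute)


lemma trace_basis:
  fixes e :: "nat \<Rightarrow> 'a::euclidean_space"
  assumes B: "is_basis_fam N e" and T: "linear T"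
  shows "(\<Sum>b\<in>Basis. T b \<bullet> b) = (\<Sum>i<N. dual_coord N e i (T (e i)))"
proof -
  have lc: "linear (\<lambda>x. dual_coord N e i (T x))" for i
    using linear_compose[OF T dual_coord_linear[OF B]] by (simp add: o_def)
  have rep: "(\<Sum>i<N. dual_coord N e i x *\<^sub>R e i) = x" for x
    using conjunct2[OF dual_coord_prop[OF B, of x]] by (rule sym)
  have "(\<Sum>b\<in>Basis. T b \<bullet> b) = (\<Sum>b\<in>Basis. (\<Sum>i<N. dual_coord N e i (T b) *\<^sub>R e i) \<bullet> b)"
    by (simp only: rep)
  also have "\<dots> = (\<Sum>b\<in>Basis. \<Sum>i<N. dual_coord N e i (T b) * (e i \<bullet> b))"
    by (simp only: inner_sum_left inner_scaleR_left)
  also have "\<dots> = (\<Sum>i<N. \<Sum>b\<in>Basis. dual_coord N e i (T b) * (e i \<bullet> b))"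
    by (rule sum.swap)
  also have "\<dots> = (\<Sum>i<N. dual_coord N e i (T (\<Sum>b\<in>Basis. (e i \<bullet> b) *\<^sub>R b)))"
  proof (rule sum.cong[OF refl])
    fix i
    show "(\<Sum>b\<in>Basis. dual_coord N e i (T b) * (e i \<bullet> b)) = dual_coord N e i (T (\<Sum>b\<in>Basis. (e i \<bullet> b) *\<^sub>R b))"
      using linear_sum[OF lc[of i], of "\<lambda>b. (e i \<bullet> b) *\<^sub>R b" Basis] linear_scale[OF lc[of i]]
      by (simp add: mult.commute)
  qed
  also have "\<dots> = (\<Sum>i<N. dual_coord N e i (T (e i)))" by (simp add: euclidean_representation)
  finally show ?thesis .
qed

lemma Omega_col: "i < n \<Longrightarrow> Omega n j (i+n) = (if j = i then 1 else 0)"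
  unfolding Omega_def by simp
lemma Omega_row: "i < n \<Longrightarrow> Omega n i j = (if j = i + n then 1 else 0)"
  unfolding Omega_def by simp

lemma split2n: "(\<Sum>i<2*n. f i) = (\<Sum>i<(n::nat). f i) + (\<Sum>i<n. f (i+n))"
proof -
  have "(\<Sum>i<2*n. f i) = (\<Sum>i=0..<2*n. f i)" by (simp only: atLeast0LessThan)
  also have "\<dots> = (\<Sum>i=0..<n. f i) + (\<Sum>i=n..<2*n. f i)"
    by (rule sum.atLeastLessThan_concat[symmetric]) auto
  also have "(\<Sum>i=n..<2*n. f i) = (\<Sum>i=0+n..<n+n. f i)" by (simp add: mult_2)
  also have "\<dots> = (\<Sum>i=0..<n. f (i+n))" by (rule sum.shift_bounds_nat_ivl)
  finally show ?thesis by (simp only: atLeast0LessThan)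
qed

locale sdf =
  fixes br :: "'a::euclidean_space \<Rightarrow> 'a \<Rightarrow> 'a" and n :: nat and e :: "nat \<Rightarrow> 'a"
    and mu lam :: real and w :: "nat \<Rightarrow> real" and B :: "nat \<Rightarrow> nat \<Rightarrow> real"
  assumes la: "lie_algebra br" and sf: "semidirect_form br n e mu lam w B"
begin

lemma bas: "is_basis_fam (2*n+2) e" using sf unfolding semidirect_form_def by blast
lemma insp: "in_sp n B" using sf unfolding semidirect_form_def by blast
lemma brh: "1 \<le> a \<Longrightarrow> a < 2*n+2 \<Longrightarrow> 1 \<le> b \<Longrightarrow> b < 2*n+2 \<Longrightarrow> br (e a) (e b) = 0"
  using sf unfolding semidirect_form_def by auto
lemma br01: "br (e 0) (e 1) = mu *\<^sub>R e 1" using sf unfolding semidirect_form_def by blast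
lemma br0j: "j < 2*n \<Longrightarrow> br (e 0) (e (j+2)) =
        w j *\<^sub>R e 1 + (\<Sum>i<2*n. ((if i = j then lam else 0) + B i j) *\<^sub>R e (i+2))"
  using sf unfolding semidirect_form_def by blast
lemma brbil: "bilinear br" using la unfolding lie_algebra_def by blast
lemma bralt: "br x x = 0" using la unfolding lie_algebra_def by blast
lemma branti: "br y x = - br x y"
proof -
  have "br (x+y) (x+y) = 0" by (rule bralt)
  then show ?thesis using bralt[of x] bralt[of y]
    by (simp add: bilinear_ladd[OF brbil] bilinear_radd[OF brbil] eq_neg_iff_add_eq_0 add.commute)
qed

definition cc :: "nat \<Rightarrow> 'a \<Rightarrow> real" where "cc k x = dual_coord (2*n+2) e k x"

lemma om_cc: "omega_std n e x y = cc 0 x * cc 1 y - cc 0 y * cc 1 x +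
       (\<Sum>i<n. cc (i+2) x * cc (i+n+2) y - cc (i+2) y * cc (i+n+2) x)"
  unfolding omega_std_def Let_def cc_def ..

lemma cb: "j < 2*n+2 \<Longrightarrow> cc k (e j) = (if k = j then 1 else 0)"
  using dual_coord_basis[OF bas] unfolding cc_def by blast
lemma cadd[simp]: "cc k (x + y) = cc k x + cc k y"
  using linear_add[OF dual_coord_linear[OF bas]] unfolding cc_def by blast
lemma cscale[simp]: "cc k (r *\<^sub>R x) = r * cc k x"
  using linear_scale[OF dual_coord_linear[OF bas]] unfolding cc_def by simp
lemma cdiff[simp]: "cc k (x - y) = cc k x - cc k y"
  using linear_diff[OF dual_coord_linear[OF bas]] unfolding cc_def by blast
lemma cneg[simp]: "cc k (- x) = - cc k x"
  using linear_neg[OF dual_coord_linear[OF bas]] unfolding cc_def by blast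
lemma czero[simp]: "cc k 0 = 0"
  using linear_0[OF dual_coord_linear[OF bas]] unfolding cc_def by blast
lemma csum[simp]: "cc k (sum f S) = (\<Sum>i\<in>S. cc k (f i))"
  using linear_sum[OF dual_coord_linear[OF bas]] unfolding cc_def by simp

lemma Omega_alt: "(if p < n \<and> q = p + n then 1 else 0) - (if q < n \<and> p = q + n then 1 else 0) = Omega n p q"
  unfolding Omega_def by auto

lemma om_basis:
  assumes a: "a < 2*n+2" and b: "b < 2*n+2"
  shows "omega_std n e (e a) (e b) = (if a = 0 \<and> b = 1 then 1 else if a = 1 \<and> b = 0 then -1
            else if 2 \<le> a \<and> 2 \<le> b then Omega n (a-2) (b-2) else 0)"
proof -
  have S: "(\<Sum>i<n. (if i + 2 = a then 1 else 0) * (if i + n + 2 = b then 1 else 0)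
              - (if i + 2 = b then 1 else 0) * (if i + n + 2 = a then (1::real) else 0))
         = (if 2 \<le> a \<and> a - 2 < n \<and> b = a + n then 1 else 0) - (if 2 \<le> b \<and> b - 2 < n \<and> a = b + n then 1 else 0)"
    by (simp only: sum_subtractf sum_pair_delta)
  have E: "omega_std n e (e a) (e b) = (if 0 = a then 1 else 0) * (if 1 = b then 1 else 0) - (if 0 = b then 1 else 0) * (if 1 = a then 1 else 0)
      + ((if 2 \<le> a \<and> a - 2 < n \<and> b = a + n then 1 else 0) - (if 2 \<le> b \<and> b - 2 < n \<and> a = b + n then 1 else 0))"
    unfolding om_cc S[symmetric] using a b by (simp add: cb add.assoc)
  have ca: "a = 0 \<or> a = 1 \<or> (\<exists>p. a = p + 2)" by presburger
  have cb': "b = 0 \<or> b = 1 \<or> (\<exists>q. b = q + 2)" by presburger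
  from ca cb' show ?thesis
  proof (elim disjE exE)
    fix p q assume pq: "a = p + 2" "b = q + 2"
    have "omega_std n e (e a) (e b) = Omega n p q" unfolding E using Omega_alt[of p q] pq by simp
    then show ?thesis using pq by simp
  qed (insert E, simp_all)
qed

lemma om_bil: "bilinear (omega_std n e)"
  unfolding bilinear_def
proof (intro conjI allI)
  fix x
  show "linear (omega_std n e x)"
    by (rule linearI) (simp_all add: om_cc algebra_simps sum_distrib_left flip: sum.distrib sum_subtractf)
next
  fix y
  show "linear (\<lambda>x. omega_std n e x y)"
    by (rule linearI) (simp_all add: om_cc algebra_simps sum_distrib_left flip: sum.distrib sum_subtractf)
qed

lemma om_alt: "omega_std n e x x = 0"
  by (simp add: om_cc)

lemma coord_cover:
  assumes "k < 2*n+2"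
  shows "k = 0 \<or> k = 1 \<or> (\<exists>i<n. k = i + 2) \<or> (\<exists>i<n. k = i + n + 2)"
proof -
  consider "k = 0" | "k = 1" | "2 \<le> k \<and> k < n + 2" | "n + 2 \<le> k" by linarith
  then show ?thesis
  proof cases
    case 3 then show ?thesis by (intro disjI2 disjI2 disjI1 exI[of _ "k-2"]) auto
  next
    case 4 then show ?thesis using assms by (intro disjI2 disjI2 disjI2 exI[of _ "k-n-2"]) auto
  qed auto
qed

lemma om_nondeg:
  assumes "\<And>y. omega_std n e x y = 0"
  shows "x = 0"
proof -
  let ?c = "\<lambda>k. cc k x"
  have ev: "omega_std n e x (e j) = ?c 0 * (if 1 = j then 1 else 0) - (if 0 = j then 1 else 0) * ?c 1
      + (\<Sum>i<n. ?c (i+2) * (if i + n + 2 = j then 1 else 0) - (if i + 2 = j then 1 else 0) * ?c (i+n+2))"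
    if "j < 2*n+2" for j
    unfolding om_cc using that by (simp add: cb add.assoc)
  have z: "?c k = 0" if k: "k < 2*n+2" for k
  proof -
    from coord_cover[OF k] consider "k = 0" | "k = 1" | "\<exists>i<n. k = i + 2" | "\<exists>i<n. k = i + n + 2" by blast
    then show ?thesis
    proof cases
      case 1
      have "omega_std n e x (e 1) = ?c 0" using ev[of 1] by simp
      then show ?thesis using assms 1 by simp
    next
      case 2
      have "omega_std n e x (e 0) = - ?c 1" using ev[of 0] by simp
      then show ?thesis using assms 2 by simp
    next
      case 3
      then obtain i0 where i0: "i0 < n" "k = i0 + 2" by blast
      have "(\<Sum>i<n. ?c (i+2) * (if i + n + 2 = i0 + 2 then 1 else 0) - (if i + 2 = i0 + 2 then 1 else 0) * ?c (i+n+2))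
          = (\<Sum>i<n. - (if i = i0 then ?c (i0+n+2) else 0))"
        by (rule sum.cong) (use i0 in auto)
      then have "omega_std n e x (e (i0+2)) = - ?c (i0+n+2)" using ev[of "i0+2"] i0 by (simp add: sum_negf)
      then have "?c (i0+n+2) = 0" using assms by simp
      have "(\<Sum>i<n. ?c (i+2) * (if i + n + 2 = i0 + n + 2 then 1 else 0) - (if i + 2 = i0 + n + 2 then 1 else 0) * ?c (i+n+2))
          = (\<Sum>i<n. (if i = i0 then ?c (i0+2) else 0))"
        by (rule sum.cong) (use i0 in auto)
      then have "omega_std n e x (e (i0+n+2)) = ?c (i0+2)" using ev[of "i0+n+2"] i0 by simp
      then show ?thesis using assms i0 by simp
    next
      case 4
      then obtain i0 where i0: "i0 < n" "k = i0 + n + 2" by blast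
      have "(\<Sum>i<n. ?c (i+2) * (if i + n + 2 = i0 + 2 then 1 else 0) - (if i + 2 = i0 + 2 then 1 else 0) * ?c (i+n+2))
          = (\<Sum>i<n. - (if i = i0 then ?c (i0+n+2) else 0))"
        by (rule sum.cong) (use i0 in auto)
      then have "omega_std n e x (e (i0+2)) = - ?c (i0+n+2)" using ev[of "i0+2"] i0 by (simp add: sum_negf)
      then show ?thesis using assms i0 by simp
    qed
  qed
  have "x = (\<Sum>k<2*n+2. ?c k *\<^sub>R e k)" using dual_coord_prop[OF bas] unfolding cc_def by blast
  also have "\<dots> = 0" using z by simp
  finally show ?thesis .
qed


abbreviation "om \<equiv> omega_std n e"
definition th :: "'a \<Rightarrow> real" where "th x = - 2 * lam * cc 0 x"

lemma th_eq: "(\<lambda>x. - 2 * lam * dual_coord (2*n+2) e 0 x) = th"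
  unfolding th_def cc_def by simp

lemma Nbound: "1 < 2*n+2" "0 < 2*n+2" by auto

lemma cM1: "cc k (br (e 0) (e 1)) = (if k = 1 then mu else 0)"
  unfolding br01 using cb[of 1] by simp

lemma cMj0: "j < 2*n \<Longrightarrow> cc 0 (br (e 0) (e (j+2))) = 0"
  unfolding br0j using cb by simp

lemma cMj1: "j < 2*n \<Longrightarrow> cc 1 (br (e 0) (e (j+2))) = w j"
  unfolding br0j using cb by simp

lemma cMjq: assumes j: "j < 2*n" and q: "q < 2*n"
  shows "cc (q+2) (br (e 0) (e (j+2))) = (if q = j then lam else 0) + B q j"
proof -
  have "cc (q+2) (br (e 0) (e (j+2))) = (\<Sum>i<2*n. ((if i = j then lam else 0) + B i j) * (if q + 2 = i + 2 then 1 else 0))"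
    unfolding br0j[OF j] using cb j by simp
  also have "\<dots> = (\<Sum>i<2*n. if i = q then ((if q = j then lam else 0) + B q j) else 0)"
    by (rule sum.cong) auto
  finally show ?thesis using q by simp
qed

lemma c0M: assumes "1 \<le> b" "b < 2*n+2" shows "cc 0 (br (e 0) (e b)) = 0"
proof (cases "b = 1")
  case True then show ?thesis using cM1 by simp
next
  case False
  define j where "j = b - 2"
  have "b = j + 2" "j < 2*n" using assms False unfolding j_def by linarith+
  then show ?thesis using cMj0 by simp
qed

lemma c0br: "cc 0 (br x y) = 0"
proof -
  have S: "span (e ` {..<2*n+2}) = UNIV" using bas unfolding is_basis_fam_def by blast
  show ?thesis
  proof (rule bi_vanish[OF _ _ S, of "\<lambda>x y. cc 0 (br x y)"])
    fix y show "linear (\<lambda>x. cc 0 (br x y))"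
      by (rule linearI) (simp_all add: bilinear_ladd[OF brbil] bilinear_lmul[OF brbil])
  next
    fix x show "linear (\<lambda>y. cc 0 (br x y))"
      by (rule linearI) (simp_all add: bilinear_radd[OF brbil] bilinear_rmul[OF brbil])
  next
    fix a b assume "a \<in> e ` {..<2*n+2}" "b \<in> e ` {..<2*n+2}"
    then obtain i j where ij: "i < 2*n+2" "j < 2*n+2" "a = e i" "b = e j" by auto
    show "cc 0 (br a b) = 0"
    proof (cases "i = 0")
      case True
      show ?thesis
      proof (cases "j = 0")
        case True then show ?thesis using ij \<open>i = 0\<close> bralt by simp
      next
        case False then show ?thesis using ij \<open>i = 0\<close> c0M[of j] by simp
      qed
    next
      case False
      show ?thesis
      proof (cases "j = 0")
        case True
        then show ?thesis using ij c0M[of i] False branti[of "e i" "e 0"] by simp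
      next
        case False
        then show ?thesis using ij \<open>i \<noteq> 0\<close> brh by simp
      qed
    qed
  qed
qed


lemma om_pq: "r < 2*n \<Longrightarrow> q < 2*n \<Longrightarrow> om (e (r+2)) (e (q+2)) = Omega n r q"
  using om_basis[of "r+2" "q+2"] by simp
lemma om_1q: "q < 2*n \<Longrightarrow> om (e 1) (e (q+2)) = 0"
  using om_basis[of 1 "q+2"] by simp
lemma om_q1: "q < 2*n \<Longrightarrow> om (e (q+2)) (e 1) = 0"
  using om_basis[of "q+2" 1] by simp
lemma om_11: "om (e 1) (e 1) = 0" by (rule om_alt)
lemma om_1b: "1 \<le> b \<Longrightarrow> b < 2*n+2 \<Longrightarrow> om (e 1) (e b) = 0"
  using om_basis[of 1 b] by simp
lemma om_b1: "1 \<le> b \<Longrightarrow> b < 2*n+2 \<Longrightarrow> om (e b) (e 1) = 0"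
  using om_basis[of b 1] by simp

lemmas obil = bilinear_ladd[OF om_bil] bilinear_radd[OF om_bil] bilinear_lmul[OF om_bil] bilinear_rmul[OF om_bil]
   bil_sum_left[OF om_bil] bil_sum_right[OF om_bil]

lemma omL1: "1 \<le> b \<Longrightarrow> b < 2*n+2 \<Longrightarrow> om (br (e 0) (e 1)) (e b) = 0"
  unfolding br01 using om_1b by (simp add: obil)
lemma omR1: "1 \<le> b \<Longrightarrow> b < 2*n+2 \<Longrightarrow> om (e b) (br (e 0) (e 1)) = 0"
  unfolding br01 using om_b1 by (simp add: obil)

lemma omLp1: assumes p: "p < 2*n" shows "om (br (e 0) (e (p+2))) (e 1) = 0"
proof -
  have "om (br (e 0) (e (p+2))) (e 1) = w p * om (e 1) (e 1) + (\<Sum>r<2*n. ((if r = p then lam else 0) + B r p) * om (e (r+2)) (e 1))"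
    unfolding br0j[OF p] by (simp add: obil)
  also have "\<dots> = 0" using om_q1 om_11 by simp
  finally show ?thesis .
qed

lemma omRp1: assumes p: "p < 2*n" shows "om (e 1) (br (e 0) (e (p+2))) = 0"
proof -
  have "om (e 1) (br (e 0) (e (p+2))) = w p * om (e 1) (e 1) + (\<Sum>r<2*n. ((if r = p then lam else 0) + B r p) * om (e 1) (e (r+2)))"
    unfolding br0j[OF p] by (simp add: obil)
  also have "\<dots> = 0" using om_1q om_11 by simp
  finally show ?thesis .
qed

lemma omLpq: assumes p: "p < 2*n" and q: "q < 2*n"
  shows "om (br (e 0) (e (p+2))) (e (q+2)) = (\<Sum>r<2*n. ((if r = p then lam else 0) + B r p) * Omega n r q)"
proof -
  have "om (br (e 0) (e (p+2))) (e (q+2)) = w p * om (e 1) (e (q+2)) + (\<Sum>r<2*n. ((if r = p then lam else 0) + B r p) * om (e (r+2)) (e (q+2)))"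
    unfolding br0j[OF p] by (simp add: obil)
  also have "\<dots> = (\<Sum>r<2*n. ((if r = p then lam else 0) + B r p) * Omega n r q)"
    using om_1q[OF q] om_pq[OF _ q] by simp
  finally show ?thesis .
qed

lemma omRpq: assumes p: "p < 2*n" and q: "q < 2*n"
  shows "om (e (p+2)) (br (e 0) (e (q+2))) = (\<Sum>r<2*n. Omega n p r * ((if r = q then lam else 0) + B r q))"
proof -
  have "om (e (p+2)) (br (e 0) (e (q+2))) = w q * om (e (p+2)) (e 1) + (\<Sum>r<2*n. ((if r = q then lam else 0) + B r q) * om (e (p+2)) (e (r+2)))"
    unfolding br0j[OF q] by (simp add: obil)
  also have "\<dots> = (\<Sum>r<2*n. Omega n p r * ((if r = q then lam else 0) + B r q))"
    using om_q1[OF p] om_pq[OF p] by (simp add: mult.commute)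
  finally show ?thesis .
qed

lemma keyid: assumes p: "p < 2*n" and q: "q < 2*n"
  shows "(\<Sum>r<2*n. ((if r = p then lam else 0) + B r p) * Omega n r q) + (\<Sum>r<2*n. Omega n p r * ((if r = q then lam else 0) + B r q))
     = 2 * lam * Omega n p q"
proof -
  have sp: "(\<Sum>j<2*n. B j p * Omega n j q) + (\<Sum>j<2*n. Omega n p j * B j q) = 0"
    using insp p q unfolding in_sp_def by blast
  have "(\<Sum>r<2*n. ((if r = p then lam else 0) + B r p) * Omega n r q) = lam * Omega n p q + (\<Sum>r<2*n. B r p * Omega n r q)"
    using p by (simp add: distrib_right sum.distrib sum_delta_real)
  moreover have "(\<Sum>r<2*n. Omega n p r * ((if r = q then lam else 0) + B r q)) = Omega n p q * lam + (\<Sum>r<2*n. Omega n p r * B r q)"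
    using q by (simp add: distrib_left sum.distrib sum_delta_real')
  ultimately show ?thesis using sp by simp
qed

lemma caseB: assumes a: "1 \<le> a" "a < 2*n+2" and b: "1 \<le> b" "b < 2*n+2"
  shows "om (br (e 0) (e a)) (e b) + om (e a) (br (e 0) (e b)) = 2 * lam * om (e a) (e b)"
proof -
  have ca: "a = 1 \<or> (\<exists>p. p < 2*n \<and> a = p + 2)" using a by presburger
  have cb': "b = 1 \<or> (\<exists>q. q < 2*n \<and> b = q + 2)" using b by presburger
  from ca cb' show ?thesis
  proof (elim disjE exE conjE)
    assume "a = 1" "b = 1" then show ?thesis using omL1[of 1] omR1[of 1] om_11 by simp
  next
    fix q assume "a = 1" "q < 2*n" "b = q + 2"
    then show ?thesis using omL1[of b] omRp1[of q] om_1q[of q] by simp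
  next
    fix p assume "p < 2*n" "a = p + 2" "b = 1"
    then show ?thesis using omLp1[of p] omR1[of a] om_q1[of p] by simp
  next
    fix p q assume "p < 2*n" "a = p + 2" "q < 2*n" "b = q + 2"
    then show ?thesis using omLpq[of p q] omRpq[of p q] keyid[of p q] om_pq[of p q] by simp
  qed
qed


lemma om_anti: "om y x = - om x y" using alt_antisym[OF om_bil om_alt] .

lemma th_lin: "linear th"
  by (rule linearI) (simp_all add: th_def algebra_simps)

lemma th_e: "j < 2*n+2 \<Longrightarrow> th (e j) = (if j = 0 then - 2 * lam else 0)"
  unfolding th_def using cb[of j 0] by simp

definition Fd :: "'a \<Rightarrow> 'a \<Rightarrow> 'a \<Rightarrow> real" where
  "Fd x y z = ce_d2 br om x y z - wedge12 th om x y z"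

lemmas bbil = bilinear_ladd[OF brbil] bilinear_radd[OF brbil] bilinear_lmul[OF brbil] bilinear_rmul[OF brbil]

lemma Fd_l1: "linear (\<lambda>x. Fd x y z)"
  by (rule linearI) (simp_all add: Fd_def ce_d2_def wedge12_def bbil obil th_def algebra_simps)
lemma Fd_l2: "linear (\<lambda>y. Fd x y z)"
  by (rule linearI) (simp_all add: Fd_def ce_d2_def wedge12_def bbil obil th_def algebra_simps)
lemma Fd_l3: "linear (\<lambda>z. Fd x y z)"
  by (rule linearI) (simp_all add: Fd_def ce_d2_def wedge12_def bbil obil th_def algebra_simps)

lemma Fd_swap12: "Fd y x z = - Fd x y z"
proof -
  have "om (br y x) z = - om (br x y) z" using branti[of x y] bilinear_lneg[OF om_bil] by simp
  then show ?thesis unfolding Fd_def ce_d2_def wedge12_def using om_anti[of x y] by simp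
qed

lemma Fd_swap23: "Fd x z y = - Fd x y z"
proof -
  have "om (br z y) x = - om (br y z) x" using branti[of y z] bilinear_lneg[OF om_bil] by simp
  then show ?thesis unfolding Fd_def ce_d2_def wedge12_def using om_anti[of z y] by simp
qed

lemma Fd_xx: "Fd x x z = 0"
  unfolding Fd_def ce_d2_def wedge12_def using bralt[of x] bilinear_lzero[OF om_bil] om_alt by simp

lemma Fd_P0: assumes j: "j < 2*n+2" and k: "k < 2*n+2" shows "Fd (e 0) (e j) (e k) = 0"
proof (cases "j = 0")
  case True then show ?thesis using Fd_xx by simp
next
  case jn: False
  show ?thesis
  proof (cases "k = 0")
    case True then show ?thesis using Fd_swap23[of "e 0" "e 0" "e j"] Fd_xx by simp
  next
    case kn: False
    have B: "om (br (e 0) (e j)) (e k) + om (e j) (br (e 0) (e k)) = 2 * lam * om (e j) (e k)"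
      using caseB[of j k] j k jn kn by simp
    have z: "om (br (e j) (e k)) (e 0) = 0" using brh[of j k] j k jn kn bilinear_lzero[OF om_bil] by simp
    have "Fd (e 0) (e j) (e k) = - om (br (e 0) (e j)) (e k) - om (e j) (br (e 0) (e k)) - 0
           - (- 2 * lam * om (e j) (e k))"
      unfolding Fd_def ce_d2_def wedge12_def using z th_e[of 0] th_e[OF j] th_e[OF k] jn kn om_anti[of "e j" "br (e 0) (e k)"]
      by simp
    then show ?thesis using B by simp
  qed
qed

lemma Fd_basis: assumes i: "i < 2*n+2" and j: "j < 2*n+2" and k: "k < 2*n+2"
  shows "Fd (e i) (e j) (e k) = 0"
proof (cases "i = 0")
  case True then show ?thesis using Fd_P0[OF j k] by simp
next
  case iN: False
  show ?thesis
  proof (cases "j = 0")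
    case True then show ?thesis using Fd_swap12[of "e i" "e j" "e k"] Fd_P0[OF i k] by simp
  next
    case jN: False
    show ?thesis
    proof (cases "k = 0")
      case True
      then show ?thesis using Fd_swap23[of "e i" "e k" "e j"] Fd_swap12[of "e i" "e k" "e j"] Fd_P0[OF i j] by simp
    next
      case kN: False
      have z: "br (e i) (e j) = 0" "br (e i) (e k) = 0" "br (e j) (e k) = 0"
        using brh i j k iN jN kN by auto
      show ?thesis
        unfolding Fd_def ce_d2_def wedge12_def using z th_e[OF i] th_e[OF j] th_e[OF k] iN jN kN
          bilinear_lzero[OF om_bil] by simp
    qed
  qed
qed

lemma Fd_zero: "Fd x y z = 0"
proof -
  have S: "span (e ` {..<2*n+2}) = UNIV" using bas unfolding is_basis_fam_def by blast
  show ?thesis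
    by (rule tri_vanish[OF Fd_l1 Fd_l2 Fd_l3 S]) (auto intro: Fd_basis)
qed

lemma LCS_std: assumes "lam \<noteq> 0"
  shows "LCS br (omega_std n e) (\<lambda>x. - 2 * lam * dual_coord (2*n+2) e 0 x)"
  unfolding th_eq LCS_def
proof (intro conjI allI impI)
  show "bilinear om" by (rule om_bil)
  show "\<And>x. om x x = 0" by (rule om_alt)
  show "\<And>x. \<forall>y. om x y = 0 \<Longrightarrow> x = 0" using om_nondeg by blast
  show "linear th" by (rule th_lin)
  show "th \<noteq> (\<lambda>x. 0)"
  proof
    assume "th = (\<lambda>x. 0)"
    then have "th (e 0) = 0" by simp
    then show False using th_e[of 0] assms by simp
  qed
  show "\<And>x y. th (br x y) = 0" unfolding th_def using c0br by simp
  show "\<And>x y z. ce_d2 br om x y z = wedge12 th om x y z" using Fd_zero unfolding Fd_def by simp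
qed


end


context sdf
begin

lemma trB: "(\<Sum>i<2*n. B i i) = 0"
proof -
  have t: "B i i + B (i+n) (i+n) = 0" if i: "i < n" for i
  proof -
    have sp: "(\<Sum>j<2*n. B j i * Omega n j (i+n)) + (\<Sum>j<2*n. Omega n i j * B j (i+n)) = 0"
      using insp i unfolding in_sp_def by simp
    have s1: "(\<Sum>j<2*n. B j i * Omega n j (i+n)) = (\<Sum>j<2*n. B j i * (if j = i then 1 else 0))"
      by (rule sum.cong) (use i in \<open>simp_all add: Omega_col Omega_row\<close>)
    have s2: "(\<Sum>j<2*n. Omega n i j * B j (i+n)) = (\<Sum>j<2*n. (if j = i + n then 1 else 0) * B j (i+n))"
      by (rule sum.cong) (use i in \<open>simp_all add: Omega_col Omega_row\<close>)
    show ?thesis using sp i unfolding s1 s2 by (simp add: sum_delta_real sum_delta_real')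
  qed
  have "(\<Sum>i<2*n. B i i) = (\<Sum>i<n. B i i + B (i+n) (i+n))" by (simp add: split2n sum.distrib)
  also have "\<dots> = 0" using t by simp
  finally show ?thesis .
qed

definition trc :: "'a \<Rightarrow> real" where "trc x = (\<Sum>i<2*n+2. cc i (br x (e i)))"

lemma trc_lin: "linear trc"
  by (rule linearI) (simp_all add: trc_def bbil sum.distrib sum_distrib_left del: sum.lessThan_Suc)

lemma trc_eq: "(\<Sum>b\<in>Basis. br x b \<bullet> b) = trc x"
  unfolding trc_def cc_def
  by (rule trace_basis[OF bas]) (use brbil in \<open>simp add: bilinear_def\<close>)

lemma trc_pos: assumes j: "1 \<le> j" "j < 2*n+2" shows "trc (e j) = 0"
proof -
  have "trc (e j) = cc 0 (br (e j) (e 0)) + cc 1 (br (e j) (e 1)) + (\<Sum>i<2*n. cc (i+2) (br (e j) (e (i+2))))"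
    unfolding trc_def using sum2[of "\<lambda>i. cc i (br (e j) (e i))" "2*n"] by simp
  also have "\<dots> = 0" using brh[of j] j branti[of "e 0" "e j"] c0M[OF j] by simp
  finally show ?thesis .
qed

lemma trc_0: "trc (e 0) = mu + 2 * real n * lam"
proof -
  have "trc (e 0) = cc 0 (br (e 0) (e 0)) + cc 1 (br (e 0) (e 1)) + (\<Sum>i<2*n. cc (i+2) (br (e 0) (e (i+2))))"
    unfolding trc_def using sum2[of "\<lambda>i. cc i (br (e 0) (e i))" "2*n"] by simp
  also have "(\<Sum>i<2*n. cc (i+2) (br (e 0) (e (i+2)))) = (\<Sum>i<2*n. lam + B i i)"
  proof (rule sum.cong[OF refl])
    fix i assume "i \<in> {..<2*n}"
    then show "cc (i+2) (br (e 0) (e (i+2))) = lam + B i i" using cMjq[of i i] by simp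
  qed
  also have "\<dots> = 2 * real n * lam" using trB by (simp add: sum.distrib)
  finally show ?thesis using bralt cM1 by simp
qed

lemma unimod_iff: assumes "1 \<le> n" shows "unimodular br \<longleftrightarrow> lam = - mu / (2 * real n)"
proof -
  have S: "span (e ` {..<2*n+2}) = UNIV" using bas unfolding is_basis_fam_def by blast
  have "unimodular br \<longleftrightarrow> (\<forall>x. trc x = 0)" unfolding unimodular_def trc_eq ..
  also have "\<dots> \<longleftrightarrow> trc (e 0) = 0"
  proof
    assume "trc (e 0) = 0"
    have "trc a = 0" if "a \<in> e ` {..<2*n+2}" for a
    proof -
      from that obtain j where j: "j < 2*n+2" "a = e j" by auto
      show ?thesis
      proof (cases "j = 0")
        case True then show ?thesis using j \<open>trc (e 0) = 0\<close> by simp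
      next
        case False then show ?thesis using j trc_pos[of j] by simp
      qed
    qed
    then show "\<forall>x. trc x = 0" using linear_zero_span[OF trc_lin] S by blast
  qed simp
  also have "\<dots> \<longleftrightarrow> lam = - mu / (2 * real n)"
  proof -
    have np: "2 * real n \<noteq> 0" using assms by simp
    have "lam = - mu / (2 * real n) \<longleftrightarrow> lam * (2 * real n) = - mu" using np by (auto simp: field_simps)
    then show ?thesis unfolding trc_0 by (simp add: algebra_simps) linarith
  qed
  finally show ?thesis .
qed

end


lemma ker_dim:
  fixes S :: "'a::euclidean_space set"
  assumes S: "subspace S" and a: "linear \<alpha>"
  shows "subspace {x\<in>S. \<alpha> x = (0::real)}" "dim S \<le> dim {x\<in>S. \<alpha> x = 0} + 1"
proof -
  let ?K = "{x\<in>S. \<alpha> x = 0}"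
  show sK: "subspace ?K" using S unfolding subspace_def by (auto simp: linear_add[OF a] linear_scale[OF a] linear_0[OF a])
  show "dim S \<le> dim ?K + 1"
  proof (cases "\<forall>x\<in>S. \<alpha> x = 0")
    case True then have "?K = S" by auto
    then show ?thesis by simp
  next
    case False
    then obtain s0 where s0: "s0 \<in> S" "\<alpha> s0 \<noteq> 0" by auto
    define s where "s = (1 / \<alpha> s0) *\<^sub>R s0"
    have sS: "s \<in> S" unfolding s_def by (rule subspace_scale[OF S s0(1)])
    have s1: "\<alpha> s = 1" unfolding s_def linear_scale[OF a] using s0(2) by simp
    have "S \<subseteq> span (insert s ?K)"
    proof
      fix x assume x: "x \<in> S"
      have xS: "x - \<alpha> x *\<^sub>R s \<in> S" by (rule subspace_diff[OF S x subspace_scale[OF S sS]])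
      have "\<alpha> (x - \<alpha> x *\<^sub>R s) = 0" unfolding linear_diff[OF a] linear_scale[OF a] s1 by simp
      then have "x - \<alpha> x *\<^sub>R s \<in> ?K" using xS by blast
      then have "x - \<alpha> x *\<^sub>R s \<in> span ?K" by (rule span_base)
      then show "x \<in> span (insert s ?K)" unfolding span_insert by blast
    qed
    then have "dim S \<le> dim (span (insert s ?K))" by (rule dim_subset)
    also have "\<dots> \<le> dim ?K + 1" by (simp add: dim_insert)
    finally show ?thesis .
  qed
qed

locale fwd =
  fixes br :: "'a::euclidean_space \<Rightarrow> 'a \<Rightarrow> 'a" and \<omega> :: "'a \<Rightarrow> 'a \<Rightarrow> real" and \<theta> :: "'a \<Rightarrow> real"
    and h :: "'a set" and n :: nat
  assumes la: "lie_algebra br" and hsub: "subspace h" and hdim: "dim h = 2*n+1"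
    and DIMa: "DIM('a) = 2*n+2" and habel: "\<And>x y. x \<in> h \<Longrightarrow> y \<in> h \<Longrightarrow> br x y = 0"
    and hideal: "\<And>x y. y \<in> h \<Longrightarrow> br x y \<in> h" and lcs: "LCS br \<omega> \<theta>" and n2: "n \<ge> 2"
begin

lemma obil': "bilinear \<omega>" using lcs unfolding LCS_def by blast
lemma oalt: "\<omega> x x = 0" using lcs unfolding LCS_def by blast
lemma ondeg: "(\<And>y. \<omega> x y = 0) \<Longrightarrow> x = 0" using lcs unfolding LCS_def by blast
lemma thlin: "linear \<theta>" using lcs unfolding LCS_def by blast
lemma thnz: "\<theta> \<noteq> (\<lambda>x. 0)" using lcs unfolding LCS_def by blast
lemma thbr: "\<theta> (br x y) = 0" using lcs unfolding LCS_def by blast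
lemma dom: "ce_d2 br \<omega> x y z = wedge12 \<theta> \<omega> x y z" using lcs unfolding LCS_def by blast
lemma oanti: "\<omega> y x = - \<omega> x y" using alt_antisym[OF obil' oalt] .
lemma brbil': "bilinear br" using la unfolding lie_algebra_def by blast

lemmas ob = bilinear_ladd[OF obil'] bilinear_radd[OF obil'] bilinear_lmul[OF obil'] bilinear_rmul[OF obil']
  bilinear_lsub[OF obil'] bilinear_rsub[OF obil'] bilinear_lzero[OF obil'] bilinear_rzero[OF obil']
  bil_sum_left[OF obil'] bil_sum_right[OF obil']
lemmas thl = linear_add[OF thlin] linear_scale[OF thlin] linear_diff[OF thlin] linear_0[OF thlin]

definition f1 :: 'a where "f1 = (SOME x. x \<notin> h)"

lemma f1_notin: "f1 \<notin> h"
proof -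
  have "dim h < DIM('a)" using hdim DIMa by simp
  then have "h \<noteq> UNIV" by auto
  then have "\<exists>x. x \<notin> h" by auto
  then show ?thesis unfolding f1_def by (rule someI_ex)
qed

lemma decomp: "\<exists>t. x - t *\<^sub>R f1 \<in> h"
proof -
  have "dim (insert f1 h) = DIM('a)"
    using f1_notin hsub hdim DIMa by (simp add: dim_insert span_eq_iff[THEN iffD2])
  then have "span (insert f1 h) = UNIV" using dim_eq_full by blast
  then have "x \<in> span (insert f1 h)" by simp
  then show ?thesis unfolding span_insert using hsub by (simp add: span_eq_iff[THEN iffD2])
qed

lemma vanish_all: assumes "\<omega> x f1 = 0" "\<And>y. y \<in> h \<Longrightarrow> \<omega> x y = 0" shows "x = 0"
proof (rule ondeg)
  fix y
  obtain t where t: "y - t *\<^sub>R f1 \<in> h" using decomp by blast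
  have "\<omega> x y = \<omega> x (y - t *\<^sub>R f1) + t * \<omega> x f1" by (simp add: ob)
  then show "\<omega> x y = 0" using assms t by simp
qed

definition Rad :: "'a set" where "Rad = {r\<in>h. \<forall>y\<in>h. \<omega> r y = 0}"

lemma Rad_sub: "Rad \<subseteq> h" unfolding Rad_def by auto

lemma Rad_line: assumes k0: "k0 \<in> Rad" "k0 \<noteq> 0" and k: "k \<in> Rad"
  shows "\<omega> k0 f1 \<noteq> 0" "k = (\<omega> k f1 / \<omega> k0 f1) *\<^sub>R k0"
proof -
  have k0h: "\<And>y. y \<in> h \<Longrightarrow> \<omega> k0 y = 0" and kh: "\<And>y. y \<in> h \<Longrightarrow> \<omega> k y = 0"
    using k0(1) k unfolding Rad_def by blast+
  show nz: "\<omega> k0 f1 \<noteq> 0"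
  proof
    assume "\<omega> k0 f1 = 0"
    then have "k0 = 0" using k0h by (rule vanish_all)
    then show False using k0(2) by simp
  qed
  define c where "c = \<omega> k f1 / \<omega> k0 f1"
  have "k - c *\<^sub>R k0 = 0"
  proof (rule vanish_all)
    have "\<omega> (k - c *\<^sub>R k0) f1 = \<omega> k f1 - c * \<omega> k0 f1"
      by (simp only: bilinear_lsub[OF obil'] bilinear_lmul[OF obil'] real_scaleR_def)
    also have "\<dots> = 0" unfolding c_def using nz by simp
    finally show "\<omega> (k - c *\<^sub>R k0) f1 = 0" .
    fix y assume y: "y \<in> h"
    have "\<omega> (k - c *\<^sub>R k0) y = \<omega> k y - c * \<omega> k0 y"
      by (simp only: bilinear_lsub[OF obil'] bilinear_lmul[OF obil'] real_scaleR_def)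
    then show "\<omega> (k - c *\<^sub>R k0) y = 0" using kh[OF y] k0h[OF y] by simp
  qed
  then show "k = (\<omega> k f1 / \<omega> k0 f1) *\<^sub>R k0" unfolding c_def by simp
qed

lemma Rad_dim: "dim Rad \<le> 1"
proof (cases "\<exists>k0\<in>Rad. k0 \<noteq> 0")
  case True
  then obtain k0 where k0: "k0 \<in> Rad" "k0 \<noteq> 0" by auto
  have "Rad \<subseteq> span {k0}"
  proof
    fix k assume "k \<in> Rad"
    then have kk: "k = (\<omega> k f1 / \<omega> k0 f1) *\<^sub>R k0" using Rad_line k0 by blast
    have "k0 \<in> span {k0}" by (rule span_base) simp
    then have "(\<omega> k f1 / \<omega> k0 f1) *\<^sub>R k0 \<in> span {k0}" by (rule span_scale)
    then show "k \<in> span {k0}" using kk by simp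
  qed
  then have "dim Rad \<le> card {k0}" by (rule dim_le_card) simp
  then show ?thesis by simp
next
  case False
  then have r0: "Rad \<subseteq> span {}" by auto
  have "dim Rad \<le> card ({}::'a set)" by (rule dim_le_card[OF r0 finite.emptyI])
  then show ?thesis unfolding card.empty by linarith
qed

lemma wedge_h: assumes "x \<in> h" "y \<in> h" "z \<in> h" shows "wedge12 \<theta> \<omega> x y z = 0"
proof -
  have "ce_d2 br \<omega> x y z = 0" unfolding ce_d2_def using habel assms by (simp add: ob)
  then show ?thesis using dom by simp
qed

lemma th_h: assumes z: "z \<in> h" shows "\<theta> z = 0"
proof (rule ccontr)
  assume tz: "\<theta> z \<noteq> 0"
  define K1 where "K1 = {x\<in>h. \<theta> x = 0}"
  define K2 where "K2 = {x\<in>K1. \<omega> z x = 0}"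
  have lz: "linear (\<omega> z)" using obil' unfolding bilinear_def by blast
  have sK1: "subspace K1" and d1: "dim h \<le> dim K1 + 1" using ker_dim[OF hsub thlin] unfolding K1_def by auto
  have d2: "dim K1 \<le> dim K2 + 1" using ker_dim[OF sK1 lz] unfolding K2_def by auto
  have sub: "K2 \<subseteq> Rad"
  proof
    fix k assume k: "k \<in> K2"
    then have kh: "k \<in> h" "\<theta> k = 0" "\<omega> z k = 0" unfolding K2_def K1_def by auto
    have "\<omega> k y = 0" if y: "y \<in> h" for y
    proof -
      have "wedge12 \<theta> \<omega> z k y = 0" using wedge_h[OF z kh(1) y] .
      then have "\<theta> z * \<omega> k y = 0" unfolding wedge12_def using kh by simp
      then show ?thesis using tz by simp
    qed
    then show "k \<in> Rad" unfolding Rad_def using kh by auto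
  qed
  have "dim K2 \<le> 1" using dim_subset[OF sub] Rad_dim by linarith
  then have "dim h \<le> 3" using d1 d2 by linarith
  then show False using hdim n2 by linarith
qed

definition a0 :: real where "a0 = \<theta> f1"
definition lam :: real where "lam = - a0 / 2"

lemma a0_nz: "a0 \<noteq> 0"
proof
  assume a: "a0 = 0"
  have "\<theta> x = 0" for x
  proof -
    obtain t where t: "x - t *\<^sub>R f1 \<in> h" using decomp by blast
    have "\<theta> x = \<theta> (x - t *\<^sub>R f1) + t * \<theta> f1" by (simp add: thl)
    then show ?thesis using th_h[OF t] a unfolding a0_def by simp
  qed
  then show False using thnz by auto
qed

lemma lam_nz: "lam \<noteq> 0" using a0_nz unfolding lam_def by simp

lemma identI: assumes y: "y \<in> h" and z: "z \<in> h"
  shows "\<omega> (br f1 y) z + \<omega> y (br f1 z) = 2 * lam * \<omega> y z"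
proof -
  have "ce_d2 br \<omega> f1 y z = - \<omega> (br f1 y) z - \<omega> y (br f1 z)"
    unfolding ce_d2_def using habel[OF y z] oanti[of y "br f1 z"] by (simp add: ob)
  moreover have "wedge12 \<theta> \<omega> f1 y z = a0 * \<omega> y z"
    unfolding wedge12_def a0_def using th_h[OF y] th_h[OF z] by simp
  ultimately show ?thesis using dom[of f1 y z] unfolding lam_def by simp
qed

end


lemma Omega_col2: "j < n \<Longrightarrow> Omega n i j = (if i = j + n then -1 else 0)"
  unfolding Omega_def by simp

locale fwd2 = fwd +
  fixes m :: nat and u v :: "nat \<Rightarrow> 'a"
  assumes uh: "\<And>i. i < m \<Longrightarrow> u i \<in> h" and vh: "\<And>i. i < m \<Longrightarrow> v i \<in> h"
    and rel_uv: "\<And>i j. i < m \<Longrightarrow> j < m \<Longrightarrow> \<omega> (u i) (v j) = (if i = j then 1 else 0)"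
    and rel_uu: "\<And>i j. i < m \<Longrightarrow> j < m \<Longrightarrow> \<omega> (u i) (u j) = 0"
    and rel_vv: "\<And>i j. i < m \<Longrightarrow> j < m \<Longrightarrow> \<omega> (v i) (v j) = 0"
    and dec: "\<And>x y. x \<in> h \<Longrightarrow> y \<in> h \<Longrightarrow> \<omega> (x - dsum \<omega> m u v x) y = 0"
begin

definition q :: "nat \<Rightarrow> 'a" where "q i = (if i < m then u i else v (i - m))"

lemma q_lo: "i < m \<Longrightarrow> q i = u i" unfolding q_def by simp
lemma q_hi: "q (i + m) = v i" unfolding q_def by simp

lemma qh: assumes "i < 2*m" shows "q i \<in> h"
  using assms uh vh unfolding q_def by auto

lemma gram: assumes i: "i < 2*m" and k: "k < 2*m" shows "\<omega> (q i) (q k) = Omega m i k"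
proof -
  have ci: "i < m \<or> (\<exists>i'. i' < m \<and> i = i' + m)" using i by presburger
  have ck: "k < m \<or> (\<exists>k'. k' < m \<and> k = k' + m)" using k by presburger
  from ci ck show ?thesis
  proof (elim disjE exE conjE)
    assume "i < m" "k < m" then show ?thesis using rel_uu[of i k] by (simp add: q_lo Omega_def)
  next
    fix k' assume "i < m" "k' < m" "k = k' + m"
    then show ?thesis using rel_uv[of i k'] by (simp add: q_lo q_hi Omega_def)
  next
    fix i' assume "i' < m" "i = i' + m" "k < m"
    then have "\<omega> (q i) (q k) = - (if k = i' then 1 else 0)" using rel_uv[of k i'] oanti[of "u k" "v i'"] by (simp add: q_lo q_hi)
    then show ?thesis using \<open>i = i' + m\<close> \<open>k < m\<close> by (cases "k = i'") (simp_all add: Omega_def)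
  next
    fix i' k' assume "i' < m" "i = i' + m" "k' < m" "k = k' + m"
    then show ?thesis using rel_vv[of i' k'] by (simp add: q_hi Omega_def)
  qed
qed

definition gam :: "'a \<Rightarrow> nat \<Rightarrow> real" where
  "gam x i = (if i < m then \<omega> x (q (i + m)) else - \<omega> x (q (i - m)))"

lemma dsum_q: "dsum \<omega> m u v x = (\<Sum>i<2*m. gam x i *\<^sub>R q i)"
proof -
  have "(\<Sum>i<2*m. gam x i *\<^sub>R q i) = (\<Sum>i<m. gam x i *\<^sub>R q i) + (\<Sum>i<m. gam x (i+m) *\<^sub>R q (i+m))"
    by (rule split2n)
  also have "(\<Sum>i<m. gam x i *\<^sub>R q i) = (\<Sum>i<m. \<omega> x (v i) *\<^sub>R u i)"
    by (rule sum.cong) (simp_all add: gam_def q_lo q_hi)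
  also have "(\<Sum>i<m. gam x (i+m) *\<^sub>R q (i+m)) = (\<Sum>i<m. - (\<omega> x (u i) *\<^sub>R v i))"
    by (rule sum.cong) (simp_all add: gam_def q_lo q_hi)
  finally show ?thesis unfolding dsum_def by (simp add: sum_subtractf sum_negf)
qed

lemma omsum_q: assumes k: "k < 2*m" shows "\<omega> (\<Sum>i<2*m. c i *\<^sub>R q i) (q k) = (\<Sum>i<2*m. c i * Omega m i k)"
proof -
  have "\<omega> (\<Sum>i<2*m. c i *\<^sub>R q i) (q k) = (\<Sum>i<2*m. c i * \<omega> (q i) (q k))" by (simp add: ob)
  also have "\<dots> = (\<Sum>i<2*m. c i * Omega m i k)" by (rule sum.cong) (simp_all add: gram k)
  finally show ?thesis .
qed

lemma omsum_q_right: assumes k: "k < 2*m" shows "\<omega> (q k) (\<Sum>i<2*m. c i *\<^sub>R q i) = (\<Sum>i<2*m. Omega m k i * c i)"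
proof -
  have "\<omega> (q k) (\<Sum>i<2*m. c i *\<^sub>R q i) = (\<Sum>i<2*m. c i * \<omega> (q k) (q i))" by (simp add: ob)
  also have "\<dots> = (\<Sum>i<2*m. Omega m k i * c i)" by (rule sum.cong) (simp_all add: gram k)
  finally show ?thesis .
qed

lemma qind: assumes z: "\<And>k. k < 2*m \<Longrightarrow> (\<Sum>i<2*m. c i * Omega m i k) = 0"
  shows "i < 2*m \<Longrightarrow> c i = 0"
proof -
  have lo: "c j = 0" if j: "j < m" for j
  proof -
    have "(\<Sum>i<2*m. c i * Omega m i (j+m)) = (\<Sum>i<2*m. c i * (if i = j then 1 else 0))"
      by (rule sum.cong) (simp_all add: Omega_col j)
    then show ?thesis using z[of "j+m"] j by (simp add: sum_delta_real')
  qed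
  have hi: "c (j+m) = 0" if j: "j < m" for j
  proof -
    have "(\<Sum>i<2*m. c i * Omega m i j) = (\<Sum>i<2*m. c i * (if i = j + m then -1 else 0))"
      by (rule sum.cong) (simp_all add: Omega_col2 j)
    then show ?thesis using z[of j] j by (simp add: sum_delta_real')
  qed
  assume i: "i < 2*m"
  have "i < m \<or> (\<exists>j. j < m \<and> i = j + m)" using i by presburger
  then show "c i = 0" using lo hi by auto
qed

lemma qsum_h: "(\<Sum>i<2*m. c i *\<^sub>R q i) \<in> h"
  by (rule subspace_sum[OF hsub]) (simp add: subspace_scale[OF hsub] qh)

lemma dsum_h: "x \<in> h \<Longrightarrow> dsum \<omega> m u v x \<in> h"
  unfolding dsum_q by (rule qsum_h)

lemma dsum_span: "dsum \<omega> m u v x \<in> span (q ` {..<2*m})"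
  unfolding dsum_q
  by (rule span_sum) (simp add: span_scale span_base)

lemma rad_part: assumes x: "x \<in> h" shows "x - dsum \<omega> m u v x \<in> Rad"
  unfolding Rad_def using subspace_diff[OF hsub x dsum_h[OF x]] dec[OF x] by blast

lemma q_indep: "(\<Sum>i<2*m. c i *\<^sub>R q i) = 0 \<Longrightarrow> \<forall>i<2*m. c i = 0"
proof -
  assume s: "(\<Sum>i<2*m. c i *\<^sub>R q i) = 0"
  have "(\<Sum>i<2*m. c i * Omega m i k) = 0" if k: "k < 2*m" for k
  proof -
    have "\<omega> (\<Sum>i<2*m. c i *\<^sub>R q i) (q k) = 0" unfolding s by (rule bilinear_lzero[OF obil'])
    then show ?thesis using omsum_q[OF k] by simp
  qed
  then show ?thesis using qind by blast
qed

lemma Rad_nz: "\<exists>f\<in>Rad. f \<noteq> 0"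
proof (rule ccontr)
  assume "\<not> (\<exists>f\<in>Rad. f \<noteq> 0)"
  then have R0: "\<And>r. r \<in> Rad \<Longrightarrow> r = 0" by blast
  have hs: "h \<subseteq> span (q ` {..<2*m})"
  proof
    fix x assume x: "x \<in> h"
    have "x - dsum \<omega> m u v x = 0" using R0 rad_part[OF x] by blast
    then have xe: "x = dsum \<omega> m u v x" by simp
    show "x \<in> span (q ` {..<2*m})" by (subst xe) (rule dsum_span)
  qed
  have "dim h \<le> dim (span (q ` {..<2*m}))" by (rule dim_subset[OF hs])
  then have d1: "dim h \<le> dim (q ` {..<2*m})" by simp
  have "q ` {..<2*m} \<subseteq> h" using qh by auto
  then have d2: "dim (q ` {..<2*m}) \<le> dim h" by (rule dim_subset)
  have "dim (q ` {..<2*m}) = 2*m" using coef_indep_props(3)[where N="2*m" and g=q] q_indep by blast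
  then have "2*n+1 = 2*m" using d1 d2 hdim by linarith
  then show False by presburger
qed


definition f2 :: 'a where "f2 = (SOME f. f \<in> Rad \<and> f \<noteq> 0)"

lemma f2: "f2 \<in> Rad" "f2 \<noteq> 0"
proof -
  have "\<exists>f. f \<in> Rad \<and> f \<noteq> 0" using Rad_nz by blast
  then have "f2 \<in> Rad \<and> f2 \<noteq> 0" unfolding f2_def by (rule someI_ex)
  then show "f2 \<in> Rad" "f2 \<noteq> 0" by auto
qed

lemma f2h: "f2 \<in> h" using f2(1) Rad_sub by blast
lemma f2q: "y \<in> h \<Longrightarrow> \<omega> f2 y = 0" using f2(1) unfolding Rad_def by blast
lemma qf2: "y \<in> h \<Longrightarrow> \<omega> y f2 = 0" using f2q oanti[of f2 y] by simp
lemma f2f1: "\<omega> f2 f1 \<noteq> 0" using Rad_line(1)[OF f2 f2(1)] .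
lemma Rad_f2: "r \<in> Rad \<Longrightarrow> r = (\<omega> r f1 / \<omega> f2 f1) *\<^sub>R f2" using Rad_line(2)[OF f2] by blast

definition ee :: "nat \<Rightarrow> 'a" where "ee k = (if k = 0 then f1 else if k = 1 then f2 else q (k - 2))"

lemma ee0: "ee 0 = f1" and ee1: "ee 1 = f2" and ee2: "ee (i+2) = q i"
  unfolding ee_def by simp_all

lemma ee_indep: assumes s: "(\<Sum>k<2*m+2. c k *\<^sub>R ee k) = 0" shows "\<forall>k<2*m+2. c k = 0"
proof -
  let ?y = "c 1 *\<^sub>R f2 + (\<Sum>i<2*m. c (i+2) *\<^sub>R q i)"
  have N2: "2*m+2 = Suc (Suc (2*m))" by simp
  have "(\<Sum>k<2*m+2. c k *\<^sub>R ee k) = c 0 *\<^sub>R ee 0 + c 1 *\<^sub>R ee 1 + (\<Sum>i<2*m. c (i+2) *\<^sub>R ee (i+2))"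
    unfolding N2 by (rule sum2)
  also have "\<dots> = c 0 *\<^sub>R f1 + ?y" by (simp only: ee0 ee1 ee2 add.assoc)
  finally have "(\<Sum>k<2*m+2. c k *\<^sub>R ee k) = c 0 *\<^sub>R f1 + ?y" .
  then have s2: "c 0 *\<^sub>R f1 + ?y = 0" using s by simp
  have yh: "?y \<in> h" by (rule subspace_add[OF hsub subspace_scale[OF hsub f2h] qsum_h])
  have c0: "c 0 = 0"
  proof (rule ccontr)
    assume c0: "c 0 \<noteq> 0"
    have "f1 = (1 / c 0) *\<^sub>R (- ?y)"
    proof -
      have "c 0 *\<^sub>R f1 = - ?y" using s2 eq_neg_iff_add_eq_0 by blast
      then have "(1 / c 0) *\<^sub>R (c 0 *\<^sub>R f1) = (1 / c 0) *\<^sub>R (- ?y)" by simp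
      then show ?thesis using c0 by simp
    qed
    then have "f1 \<in> h" using subspace_scale[OF hsub subspace_neg[OF hsub yh]] by simp
    then show False using f1_notin by simp
  qed
  then have y0: "?y = 0" using s2 by simp
  have ci: "c (i+2) = 0" if i: "i < 2*m" for i
  proof -
    have "(\<Sum>i<2*m. c (i+2) * Omega m i k) = 0" if k: "k < 2*m" for k
    proof -
      have "\<omega> ?y (q k) = 0" unfolding y0 by (rule bilinear_lzero[OF obil'])
      moreover have "\<omega> ?y (q k) = c 1 * \<omega> f2 (q k) + \<omega> (\<Sum>i<2*m. c (i+2) *\<^sub>R q i) (q k)"
        by (simp only: bilinear_ladd[OF obil'] bilinear_lmul[OF obil'] real_scaleR_def)
      ultimately show ?thesis using f2q[OF qh[OF k]] omsum_q[OF k] by simp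
    qed
    then show ?thesis using qind[of "\<lambda>i. c (i+2)"] i by blast
  qed
  then have "(\<Sum>i<2*m. c (i+2) *\<^sub>R q i) = 0" by simp
  then have "c 1 *\<^sub>R f2 = 0" using y0 by simp
  then have c1: "c 1 = 0" using f2(2) by simp
  show ?thesis
  proof (intro allI impI)
    fix k assume k: "k < 2*m+2"
    have "k = 0 \<or> k = 1 \<or> (\<exists>i. i < 2*m \<and> k = i + 2)" using k by presburger
    then show "c k = 0" using c0 c1 ci by auto
  qed
qed

lemma ee_span: "span (ee ` {..<2*m+2}) = UNIV"
proof -
  let ?S = "span (ee ` {..<2*m+2})"
  have e0: "f1 \<in> ?S" by (rule span_base) (use ee0 in \<open>force\<close>)
  have e1: "f2 \<in> ?S" by (rule span_base) (use ee1 in \<open>force\<close>)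
  have qS: "q ` {..<2*m} \<subseteq> ee ` {..<2*m+2}"
  proof
    fix x assume "x \<in> q ` {..<2*m}"
    then obtain i where i: "i < 2*m" "x = q i" by blast
    then have "x = ee (i+2)" "i + 2 < 2*m+2" using ee2 by auto
    then show "x \<in> ee ` {..<2*m+2}" by blast
  qed
  have "x \<in> ?S" for x
  proof -
    obtain t where t: "x - t *\<^sub>R f1 \<in> h" using decomp by blast
    let ?y = "x - t *\<^sub>R f1"
    have r: "?y - dsum \<omega> m u v ?y = (\<omega> (?y - dsum \<omega> m u v ?y) f1 / \<omega> f2 f1) *\<^sub>R f2"
      using Rad_f2[OF rad_part[OF t]] .
    have xe: "x = t *\<^sub>R f1 + (\<omega> (?y - dsum \<omega> m u v ?y) f1 / \<omega> f2 f1) *\<^sub>R f2 + dsum \<omega> m u v ?y"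
      using r by (simp add: algebra_simps)
    have ds: "dsum \<omega> m u v ?y \<in> ?S" using dsum_span span_mono[OF qS] by blast
    show ?thesis by (subst xe) (intro span_add span_scale e0 e1 ds)
  qed
  then show ?thesis by auto
qed

lemma ee_basis: "is_basis_fam (2*m+2) ee"
  unfolding is_basis_fam_def using ee_indep ee_span by blast

lemma m_n: "m = n"
  using basis_fam_card[OF ee_basis] DIMa by simp


definition mu0 :: real where "mu0 = \<omega> (br f1 f2) f1 / \<omega> f2 f1"

lemma Mf2: "br f1 f2 = mu0 *\<^sub>R f2"
proof -
  have Mh: "br f1 f2 \<in> h" by (rule hideal[OF f2h])
  have "\<omega> (br f1 f2) z = 0" if z: "z \<in> h" for z
  proof -
    have "\<omega> (br f1 f2) z + \<omega> f2 (br f1 z) = 2 * lam * \<omega> f2 z" by (rule identI[OF f2h z])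
    then show ?thesis using f2q[OF z] f2q[OF hideal[OF z]] by simp
  qed
  then have "br f1 f2 \<in> Rad" unfolding Rad_def using Mh by blast
  then show ?thesis unfolding mu0_def by (rule Rad_f2)
qed

definition AA :: "nat \<Rightarrow> nat \<Rightarrow> real" where "AA i j = gam (br f1 (q j)) i"
definition Bm :: "nat \<Rightarrow> nat \<Rightarrow> real" where "Bm i j = AA i j - (if i = j then lam else 0)"
definition ww :: "nat \<Rightarrow> real" where
  "ww j = \<omega> (br f1 (q j) - dsum \<omega> m u v (br f1 (q j))) f1 / \<omega> f2 f1"

lemma Mq: assumes j: "j < 2*m" shows "br f1 (q j) = ww j *\<^sub>R f2 + (\<Sum>i<2*m. AA i j *\<^sub>R q i)"
proof -
  have Mh: "br f1 (q j) \<in> h" by (rule hideal[OF qh[OF j]])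
  have r: "br f1 (q j) - dsum \<omega> m u v (br f1 (q j)) = ww j *\<^sub>R f2"
    unfolding ww_def by (rule Rad_f2[OF rad_part[OF Mh]])
  have "br f1 (q j) = ww j *\<^sub>R f2 + dsum \<omega> m u v (br f1 (q j))" using r by (simp add: algebra_simps)
  then show ?thesis unfolding dsum_q AA_def .
qed

lemma omMq_left: assumes i: "i < 2*m" and k: "k < 2*m"
  shows "\<omega> (br f1 (q i)) (q k) = (\<Sum>j<2*m. AA j i * Omega m j k)"
proof -
  have "\<omega> (br f1 (q i)) (q k) = ww i * \<omega> f2 (q k) + \<omega> (\<Sum>j<2*m. AA j i *\<^sub>R q j) (q k)"
    unfolding Mq[OF i] by (simp only: bilinear_ladd[OF obil'] bilinear_lmul[OF obil'] real_scaleR_def)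
  then show ?thesis using f2q[OF qh[OF k]] omsum_q[OF k] by simp
qed

lemma omMq_right: assumes i: "i < 2*m" and k: "k < 2*m"
  shows "\<omega> (q i) (br f1 (q k)) = (\<Sum>j<2*m. Omega m i j * AA j k)"
proof -
  have "\<omega> (q i) (br f1 (q k)) = ww k * \<omega> (q i) f2 + \<omega> (q i) (\<Sum>j<2*m. AA j k *\<^sub>R q j)"
    unfolding Mq[OF k] by (simp only: bilinear_radd[OF obil'] bilinear_rmul[OF obil'] real_scaleR_def)
  then show ?thesis using qf2[OF qh[OF i]] omsum_q_right[OF i] by simp
qed

lemma insp_m: "in_sp m Bm"
  unfolding in_sp_def
proof (intro allI impI)
  fix i k assume i: "i < 2*m" and k: "k < 2*m"
  have I: "\<omega> (br f1 (q i)) (q k) + \<omega> (q i) (br f1 (q k)) = 2 * lam * Omega m i k"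
    using identI[OF qh[OF i] qh[OF k]] gram[OF i k] by simp
  have s1: "(\<Sum>j<2*m. Bm j i * Omega m j k) = (\<Sum>j<2*m. AA j i * Omega m j k) - lam * Omega m i k"
  proof -
    have "(\<Sum>j<2*m. Bm j i * Omega m j k) = (\<Sum>j<2*m. AA j i * Omega m j k) - (\<Sum>j<2*m. (if j = i then lam else 0) * Omega m j k)"
      unfolding Bm_def by (simp add: left_diff_distrib sum_subtractf)
    then show ?thesis using i by (simp add: sum_delta_real)
  qed
  have s2: "(\<Sum>j<2*m. Omega m i j * Bm j k) = (\<Sum>j<2*m. Omega m i j * AA j k) - Omega m i k * lam"
  proof -
    have "(\<Sum>j<2*m. Omega m i j * Bm j k) = (\<Sum>j<2*m. Omega m i j * AA j k) - (\<Sum>j<2*m. Omega m i j * (if j = k then lam else 0))"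
      unfolding Bm_def by (simp add: right_diff_distrib sum_subtractf)
    then show ?thesis using k by (simp add: sum_delta_real')
  qed
  show "(\<Sum>j<2*m. Bm j i * Omega m j k) + (\<Sum>j<2*m. Omega m i j * Bm j k) = 0"
    using I omMq_left[OF i k] omMq_right[OF i k] unfolding s1 s2 by simp
qed

lemma ee_h: assumes "1 \<le> a" "a < 2*m+2" shows "ee a \<in> h"
proof (cases "a = 1")
  case True then show ?thesis using f2h ee1 by simp
next
  case False
  then have "a - 2 < 2*m" "ee a = q (a - 2)" using assms unfolding ee_def by auto
  then show ?thesis using qh by simp
qed

lemma sdf_m: "semidirect_form br m ee mu0 lam ww Bm"
  unfolding semidirect_form_def
proof (intro conjI ballI allI impI)
  show "is_basis_fam (2*m+2) ee" by (rule ee_basis)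
  show "in_sp m Bm" by (rule insp_m)
  fix a b assume "a \<in> {1..2*m+1}" "b \<in> {1..2*m+1}"
  then show "br (ee a) (ee b) = 0" using ee_h habel by simp
next
  show "br (ee 0) (ee 1) = mu0 *\<^sub>R ee 1" unfolding ee0 ee1 by (rule Mf2)
next
  fix j assume j: "j < 2*m"
  have "(\<Sum>i<2*m. ((if i = j then lam else 0) + Bm i j) *\<^sub>R ee (i+2)) = (\<Sum>i<2*m. AA i j *\<^sub>R q i)"
    by (rule sum.cong) (simp_all add: Bm_def ee_def)
  then show "br (ee 0) (ee (j+2)) = ww j *\<^sub>R ee 1 + (\<Sum>i<2*m. ((if i = j then lam else 0) + Bm i j) *\<^sub>R ee (i+2))"
    unfolding ee0 ee1 ee2 using Mq[OF j] by simp
qed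

lemma fwd2_result: "\<exists>e mu lam w B. semidirect_form br n e mu lam w B \<and> lam \<noteq> 0"
  using sdf_m lam_nz m_n by blast

end

context fwd
begin

lemma fwd_result: "\<exists>e mu lam w B. semidirect_form br n e mu lam w B \<and> lam \<noteq> 0"
proof -
  obtain m u v where P: "(\<forall>i<m. u i \<in> h \<and> v i \<in> h)"
     "(\<forall>i<m. \<forall>j<m. \<omega> (u i) (v j) = (if i = j then 1 else 0) \<and> \<omega> (u i) (u j) = 0 \<and> \<omega> (v i) (v j) = 0)"
     "(\<forall>x\<in>h. \<forall>y\<in>h. \<omega> (x - dsum \<omega> m u v x) y = 0)"
    using darboux[OF obil' oalt hsub] by blast
  interpret fwd2 br \<omega> \<theta> h n m u v
    by unfold_locales (use P in auto)
  show ?thesis by (rule fwd2_result)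
qed

end

theorem theorem4p1:
  fixes br :: "'a::euclidean_space \<Rightarrow> 'a \<Rightarrow> 'a" and n :: nat
  assumes "lie_algebra br" and "almost_abelian br"
    and "DIM('a) = 2*n+2" and "n \<ge> 2"
  shows "((\<exists>\<omega> \<theta>. LCS br \<omega> \<theta>) \<longleftrightarrow>
           (\<exists>e mu lam w B. semidirect_form br n e mu lam w B \<and> lam \<noteq> 0)) \<and>
         (\<forall>e mu lam w B. semidirect_form br n e mu lam w B \<and> lam \<noteq> 0 \<longrightarrow>
            LCS br (omega_std n e) (\<lambda>x. - 2 * lam * dual_coord (2*n+2) e 0 x)) \<and>
         (\<forall>e mu lam w B. semidirect_form br n e mu lam w B \<longrightarrow>
            (unimodular br \<longleftrightarrow> lam = - mu / (2 * real n)))"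
proof -
  have n1: "1 \<le> n" using assms(4) by simp
  have P2: "\<forall>e mu lam w B. semidirect_form br n e mu lam w B \<and> lam \<noteq> 0 \<longrightarrow>
            LCS br (omega_std n e) (\<lambda>x. - 2 * lam * dual_coord (2*n+2) e 0 x)"
  proof (intro allI impI)
    fix e mu lam w B assume H: "semidirect_form br n e mu lam w B \<and> lam \<noteq> 0"
    interpret sdf br n e mu lam w B using assms(1) H by unfold_locales auto
    show "LCS br (omega_std n e) (\<lambda>x. - 2 * lam * dual_coord (2*n+2) e 0 x)" using H LCS_std by blast
  qed
  have P3: "\<forall>e mu lam w B. semidirect_form br n e mu lam w B \<longrightarrow>
            (unimodular br \<longleftrightarrow> lam = - mu / (2 * real n))"
  proof (intro allI impI)
    fix e mu lam w B assume H: "semidirect_form br n e mu lam w B"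
    interpret sdf br n e mu lam w B using assms(1) H by unfold_locales auto
    show "unimodular br \<longleftrightarrow> lam = - mu / (2 * real n)" using unimod_iff[OF n1] .
  qed
  have P1: "(\<exists>\<omega> \<theta>. LCS br \<omega> \<theta>) \<longleftrightarrow> (\<exists>e mu lam w B. semidirect_form br n e mu lam w B \<and> lam \<noteq> 0)"
  proof
    assume "\<exists>\<omega> \<theta>. LCS br \<omega> \<theta>"
    then obtain \<omega> \<theta> where L: "LCS br \<omega> \<theta>" by blast
    obtain h :: "'a set" where h: "subspace h" "dim h = DIM('a) - 1" "\<forall>x\<in>h. \<forall>y\<in>h. br x y = 0"
      "\<forall>x. \<forall>y\<in>h. br x y \<in> h" using assms(2) unfolding almost_abelian_def by blast
    interpret fwd br \<omega> \<theta> h n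
    proof
      show "lie_algebra br" by (rule assms(1))
      show "subspace h" by (rule h(1))
      show "dim h = 2*n+1" using h(2) assms(3) by simp
      show "DIM('a) = 2*n+2" by (rule assms(3))
      show "\<And>x y. x \<in> h \<Longrightarrow> y \<in> h \<Longrightarrow> br x y = 0" using h(3) by blast
      show "\<And>x y. y \<in> h \<Longrightarrow> br x y \<in> h" using h(4) by blast
      show "LCS br \<omega> \<theta>" by (rule L)
      show "n \<ge> 2" by (rule assms(4))
    qed
    show "\<exists>e mu lam w B. semidirect_form br n e mu lam w B \<and> lam \<noteq> 0" by (rule fwd_result)
  next
    assume "\<exists>e mu lam w B. semidirect_form br n e mu lam w B \<and> lam \<noteq> 0"
    then show "\<exists>\<omega> \<theta>. LCS br \<omega> \<theta>" using P2 by blast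
  qed
  show ?thesis using P1 P2 P3 by blast
qed

end
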